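(* Let $n\geq1$, $\beta>0$, and let $f(\xi)\in\mathbb{Z}_p[\xi_1,\ldots,\xi_n]$ be an elliptic polynomial of degree $d$. Then there is a positive constant $A$ such that for every $x\in\mathbb{Q}_p^n$ and every $t>0$, \[ |Z(x,t)|\leq A\,t\,\big(\|x\|_p+t^{\frac{1}{\beta d}}\big)^{-d\beta-n}. \]
   Context: $\mathbb{Q}_p$ is the field of $p$-adic numbers, $\mathbb{Z}_p$ its ring of integers, $|\cdot|_p$ the $p$-adic absolute value, $\|x\|_p=\max_i|x_i|_p$. $d\xi$ is the Haar measure on $\mathbb{Q}_p^n$ with $\mathbb{Z}_p^n$ of measure $1$. $\Psi$ is the standard additive character of $\mathbb{Q}_p$, $\Psi(a)=\exp(2\pi i\{a\}_p)$ where $\{a\}_p$ is the fractional part of $a$, and $x\cdot\xi=\sum_i x_i\xi_i$. A polynomial $f\in\mathbb{Q}_p[\xi_1,\dots,\xi_n]$ is elliptic of degree $d$ if it is a non-constant homogeneous polynomial of degree $d$ and $f(\xi)=0\iff\xi=0$. $Z(x,t)=\int_{\mathbb{Q}_p^n}\Psi(x\cdot\xi)e^{-t|f(\xi)|_p^{\beta}}\,d\xi$ for $x\in\mathbb{Q}_p^n$, $t>0$. *)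

theory Defs
  imports "HOL-Analysis.Analysis" "HOL-Computational_Algebra.Primes"
begin

(* A p-adic number is represented canonically by its digit function
   x = sum_i (x i) p^i  with digits x i < p and support bounded below. *)
type_synonym padic = "int \<Rightarrow> nat"
(* A vector in Q_p^n: coordinates j < n, padded with zero for j >= n. *)
type_synonym padicvec = "nat \<Rightarrow> padic"

definition padic_carrier :: "nat \<Rightarrow> padic set" where
  "padic_carrier p = {x. (\<forall>i. x i < p) \<and> (\<exists>N. \<forall>i<N. x i = 0)}"

definition padic_zero :: padic where
  "padic_zero = (\<lambda>_. 0)"

definition padic_one :: padic where
  "padic_one = (\<lambda>i. if i = 0 then 1 else 0)"

definition padic_trunc :: "nat \<Rightarrow> padic \<Rightarrow> int \<Rightarrow> rat" where
  "padic_trunc p x k = (\<Sum>i\<in>{i. i < k \<and> x i \<noteq> 0}. of_nat (x i) * of_nat p powi i)"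

definition rat_digit :: "nat \<Rightarrow> rat \<Rightarrow> int \<Rightarrow> nat" where
  "rat_digit p q i = nat (\<lfloor>q / (of_nat p powi i)\<rfloor> mod int p)"

(* p-adic limit of non-negative rational approximants, digit by digit *)
definition padic_of_approx :: "nat \<Rightarrow> (nat \<Rightarrow> rat) \<Rightarrow> padic" where
  "padic_of_approx p q = (\<lambda>i. THE c. \<forall>\<^sub>F m in sequentially. rat_digit p (q m) i = c)"

definition padic_add :: "nat \<Rightarrow> padic \<Rightarrow> padic \<Rightarrow> padic" where
  "padic_add p x y = padic_of_approx p (\<lambda>m. padic_trunc p x (int m) + padic_trunc p y (int m))"

definition padic_mult :: "nat \<Rightarrow> padic \<Rightarrow> padic \<Rightarrow> padic" where
  "padic_mult p x y = padic_of_approx p (\<lambda>m. padic_trunc p x (int m) * padic_trunc p y (int m))"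

definition padic_pow :: "nat \<Rightarrow> padic \<Rightarrow> nat \<Rightarrow> padic" where
  "padic_pow p x k = (padic_mult p x ^^ k) padic_one"

definition padic_abs :: "nat \<Rightarrow> padic \<Rightarrow> real" where
  "padic_abs p x = (if x = padic_zero then 0 else real p powi (- (LEAST i. x i \<noteq> 0)))"

definition padic_frac :: "nat \<Rightarrow> padic \<Rightarrow> rat" where
  "padic_frac p x = padic_trunc p x 0"

definition padic_char :: "nat \<Rightarrow> padic \<Rightarrow> complex" where
  "padic_char p a = cis (2 * pi * real_of_rat (padic_frac p a))"

definition qpn :: "nat \<Rightarrow> nat \<Rightarrow> padicvec set" where
  "qpn p n = {x. (\<forall>j<n. x j \<in> padic_carrier p) \<and> (\<forall>j\<ge>n. x j = padic_zero)}"

definition zpn :: "nat \<Rightarrow> nat \<Rightarrow> padicvec set" where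
  "zpn p n = {x \<in> qpn p n. \<forall>j<n. \<forall>i<0. x j i = 0}"

definition padic_vzero :: padicvec where
  "padic_vzero = (\<lambda>_. padic_zero)"

definition padic_norm :: "nat \<Rightarrow> nat \<Rightarrow> padicvec \<Rightarrow> real" where
  "padic_norm p n x = Max ((\<lambda>j. padic_abs p (x j)) ` {..<n})"

definition vadd :: "nat \<Rightarrow> nat \<Rightarrow> padicvec \<Rightarrow> padicvec \<Rightarrow> padicvec" where
  "vadd p n x y = (\<lambda>j. if j < n then padic_add p (x j) (y j) else padic_zero)"

definition padic_dot :: "nat \<Rightarrow> nat \<Rightarrow> padicvec \<Rightarrow> padicvec \<Rightarrow> padic" where
  "padic_dot p n x \<xi> = foldr (\<lambda>j acc. padic_add p (padic_mult p (x j) (\<xi> j)) acc) [0..<n] padic_zero"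

definition padic_ball :: "nat \<Rightarrow> nat \<Rightarrow> padicvec \<Rightarrow> int \<Rightarrow> padicvec set" where
  "padic_ball p n a k = {vadd p n a z | z. z \<in> qpn p n \<and> padic_norm p n z \<le> real p powi k}"

definition padic_haar :: "nat \<Rightarrow> nat \<Rightarrow> padicvec measure \<Rightarrow> bool" where
  "padic_haar p n M \<longleftrightarrow>
     space M = qpn p n \<and>
     sets M = sigma_sets (qpn p n) {padic_ball p n a k | a k. a \<in> qpn p n} \<and>
     (\<forall>a\<in>qpn p n. \<forall>A\<in>sets M. vadd p n a ` A \<in> sets M \<and>
         emeasure M (vadd p n a ` A) = emeasure M A) \<and>
     emeasure M (zpn p n) = 1"

(* A polynomial in n variables: a finite list of terms (coefficient, exponent vector) *)
type_synonym padic_poly = "(padic \<times> (nat \<Rightarrow> nat)) list"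

definition monomial_eval :: "nat \<Rightarrow> nat \<Rightarrow> (nat \<Rightarrow> nat) \<Rightarrow> padicvec \<Rightarrow> padic" where
  "monomial_eval p n \<alpha> \<xi> = foldr (\<lambda>j acc. padic_mult p (padic_pow p (\<xi> j) (\<alpha> j)) acc) [0..<n] padic_one"

definition poly_eval :: "nat \<Rightarrow> nat \<Rightarrow> padic_poly \<Rightarrow> padicvec \<Rightarrow> padic" where
  "poly_eval p n f \<xi> = foldr (\<lambda>(c, \<alpha>) acc. padic_add p (padic_mult p c (monomial_eval p n \<alpha> \<xi>)) acc) f padic_zero"

definition padic_homogeneous :: "nat \<Rightarrow> nat \<Rightarrow> nat \<Rightarrow> padic_poly \<Rightarrow> bool" where
  "padic_homogeneous p n d f \<longleftrightarrow>
     (\<forall>(c, \<alpha>)\<in>set f. c \<in> padic_carrier p \<and> (\<forall>j\<ge>n. \<alpha> j = 0) \<and> (\<Sum>j<n. \<alpha> j) = d)"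

definition padic_int_coeffs :: "padic_poly \<Rightarrow> bool" where
  "padic_int_coeffs f \<longleftrightarrow> (\<forall>(c, \<alpha>)\<in>set f. \<forall>i<0. c i = 0)"

definition padic_elliptic :: "nat \<Rightarrow> nat \<Rightarrow> nat \<Rightarrow> padic_poly \<Rightarrow> bool" where
  "padic_elliptic p n d f \<longleftrightarrow>
     d \<ge> 1 \<and> padic_homogeneous p n d f \<and>
     (\<forall>\<xi>\<in>qpn p n. poly_eval p n f \<xi> = padic_zero \<longleftrightarrow> \<xi> = padic_vzero)"

definition heat_kernel :: "nat \<Rightarrow> nat \<Rightarrow> padic_poly \<Rightarrow> real \<Rightarrow> padicvec measure \<Rightarrow> padicvec \<Rightarrow> real \<Rightarrow> complex" where
  "heat_kernel p n f \<beta> M x t =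
     (LINT \<xi>|M. padic_char p (padic_dot p n x \<xi>) *
                 complex_of_real (exp (- t * padic_abs p (poly_eval p n f \<xi>) powr \<beta>)))"

end

theory Submission
  imports Defs
begin

definition inZ :: "nat \<Rightarrow> int \<Rightarrow> rat \<Rightarrow> bool" where
  "inZ p m q \<longleftrightarrow> (\<exists>z::int. q = of_int z * of_nat p powi m)"

definition zb :: "int \<Rightarrow> padic \<Rightarrow> bool" where
  "zb m x \<longleftrightarrow> (\<forall>i<m. x i = 0)"

lemma inZ_0[simp]: "inZ p m 0"
  unfolding inZ_def by (rule exI[of _ 0]) simp

lemma inZ_add: "inZ p m a \<Longrightarrow> inZ p m b \<Longrightarrow> inZ p m (a + b)"
  unfolding inZ_def by (metis distrib_right of_int_add)

lemma inZ_minus: "inZ p m a \<Longrightarrow> inZ p m (- a)"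
  unfolding inZ_def by (metis minus_mult_left of_int_minus)

lemma inZ_diff: "inZ p m a \<Longrightarrow> inZ p m b \<Longrightarrow> inZ p m (a - b)"
  using inZ_add[of p m a "-b"] inZ_minus[of p m b] by simp

lemma inZ_sum: "(\<And>i. i \<in> A \<Longrightarrow> inZ p m (f i)) \<Longrightarrow> inZ p m (sum f A)"
  by (induction A rule: infinite_finite_induct) (auto intro: inZ_add)

lemma inZ_mult: "inZ p a x \<Longrightarrow> inZ p b y \<Longrightarrow> p > 0 \<Longrightarrow> inZ p (a + b) (x * y)"
proof -
  assume "inZ p a x" "inZ p b y" "p > 0"
  then obtain z w where "x = of_int z * of_nat p powi a" "y = of_int w * of_nat p powi b"
    unfolding inZ_def by auto
  thus ?thesis unfolding inZ_def using \<open>p > 0\<close>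
    by (intro exI[of _ "z * w"]) (simp add: power_int_add algebra_simps)
qed

lemma inZ_mono: assumes "inZ p m a" "m' \<le> m" "p > 0" shows "inZ p m' a"
proof -
  from assms obtain z where z: "a = of_int z * of_nat p powi m" unfolding inZ_def by auto
  have "(of_nat p :: rat) powi m = of_nat p powi m' * of_nat p powi (m - m')"
    using assms(3) by (simp add: power_int_add[symmetric])
  also have "(of_nat p :: rat) powi (m - m') = of_int (int p ^ nat (m - m'))"
    using assms(2) by (simp add: power_int_nonneg_exp)
  finally show ?thesis unfolding inZ_def using z
    by (intro exI[of _ "z * int p ^ nat (m - m')"]) (simp add: algebra_simps)
qed

lemma inZ_powi: "inZ p m (of_nat p powi m)"
  unfolding inZ_def by (rule exI[of _ 1]) simp

lemma inZ_of_int: "inZ p 0 (of_int z)"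
  unfolding inZ_def by (rule exI[of _ z]) simp

lemma inZ_of_nat: "inZ p 0 (of_nat z)"
  unfolding inZ_def by (rule exI[of _ "int z"]) simp

lemma inZ_scale: "inZ p m a \<Longrightarrow> p > 0 \<Longrightarrow> inZ p (m + k) (of_nat p powi k * a)"
  using inZ_mult[of p k "of_nat p powi k" m a] inZ_powi[of p k] by (simp add: add.commute)

lemma inZ_scale_iff: "p > 0 \<Longrightarrow> inZ p (m + k) (of_nat p powi k * a) \<longleftrightarrow> inZ p m a"
proof
  assume "p > 0" "inZ p (m + k) (of_nat p powi k * a)"
  then obtain z where z: "of_nat p powi k * a = of_int z * of_nat p powi (m + k)" unfolding inZ_def by auto
  hence "a = of_int z * of_nat p powi m" using \<open>p > 0\<close> by (simp add: power_int_add)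
  thus "inZ p m a" unfolding inZ_def by auto
qed (rule inZ_scale)

section \<open>Digits of rationals\<close>

lemma rat_digit_cong:
  assumes "inZ p m (q1 - q2)" "i < m" "p > 0"
  shows "rat_digit p q1 i = rat_digit p q2 i"
proof -
  from assms obtain z where z: "q1 = q2 + of_int z * of_nat p powi m" unfolding inZ_def
    by (metis add.commute diff_add_cancel)
  have pm: "(of_nat p :: rat) powi m = of_nat p powi i * of_nat p powi (m - i)"
    using assms(3) by (simp add: power_int_add[symmetric])
  have pe: "(of_nat p :: rat) powi (m - i) = of_int (int p ^ nat (m - i))"
    using assms(2) by (simp add: power_int_nonneg_exp)
  have "q1 / of_nat p powi i = q2 / of_nat p powi i + of_int (z * int p ^ nat (m - i))"
    using assms(3) by (simp add: z pm pe field_simps)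
  hence fl: "\<lfloor>q1 / of_nat p powi i\<rfloor> = \<lfloor>q2 / of_nat p powi i\<rfloor> + z * int p ^ nat (m - i)"
    by (simp only: floor_add_int)
  have "int p dvd z * int p ^ nat (m - i)" using assms(2)
    by (simp add: dvd_power)
  hence "\<lfloor>q1 / of_nat p powi i\<rfloor> mod int p = \<lfloor>q2 / of_nat p powi i\<rfloor> mod int p"
    unfolding fl by (metis mod_add_right_eq add_0_right dvd_imp_mod_0 mod_add_left_eq)
  thus ?thesis unfolding rat_digit_def by simp
qed

lemma rat_digit_shift:
  assumes "p > 0"
  shows "rat_digit p (of_nat p powi k * q) i = rat_digit p q (i - k)"
proof -
  have "of_nat p powi k * q / of_nat p powi i = q / (of_nat p powi (i - k) :: rat)"
    using assms by (simp add: power_int_diff field_simps)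
  thus ?thesis unfolding rat_digit_def by simp
qed

lemma rat_digit_less: "p > 0 \<Longrightarrow> rat_digit p q i < p"
  unfolding rat_digit_def by (simp add: nat_less_iff)

lemma rat_digit_low:
  assumes "inZ p N q" "i < N" "p > 0"
  shows "rat_digit p q i = 0"
proof -
  have "rat_digit p q i = rat_digit p 0 i"
    by (rule rat_digit_cong[OF _ assms(2,3)]) (use assms(1) in simp)
  thus ?thesis by (simp add: rat_digit_def)
qed

lemma rat_digit_0[simp]: "rat_digit p 0 i = 0"
  by (simp add: rat_digit_def)

lemma floor_div_nat_rat: "p > 0 \<Longrightarrow> \<lfloor>(x::rat) / of_nat p\<rfloor> = \<lfloor>x\<rfloor> div int p"
proof -
  assume p: "p > 0"
  let ?f = "\<lfloor>x\<rfloor>"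
  have "of_int (?f div int p) \<le> x / of_nat p"
  proof -
    have "?f div int p * int p = ?f - ?f mod int p" by (simp add: minus_mod_eq_div_mult)
    moreover have "?f mod int p \<ge> 0" using p by simp
    ultimately have "?f div int p * int p \<le> ?f" by linarith
    hence "of_int (?f div int p) * of_nat p \<le> (of_int ?f :: rat)"
      by (metis of_int_le_iff of_int_mult of_int_of_nat_eq)
    also have "\<dots> \<le> x" by simp
    finally show ?thesis using p by (simp add: field_simps)
  qed
  moreover have "x / of_nat p < of_int (?f div int p) + 1"
  proof -
    have "x < of_int (?f + 1)" by linarith
    also have "?f + 1 \<le> (?f div int p + 1) * int p"
    proof -
      have "?f div int p * int p = ?f - ?f mod int p" by (simp add: minus_mod_eq_div_mult)
      moreover have "?f mod int p < int p" using p by simp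
      ultimately show ?thesis by (simp add: distrib_right)
    qed
    hence "(of_int (?f + 1) :: rat) \<le> of_int ((?f div int p + 1) * int p)" by (simp only: of_int_le_iff)
    finally show ?thesis using p by (simp add: field_simps)
  qed
  ultimately show ?thesis by (intro floor_unique) auto
qed

lemma digit_expansion:
  assumes "inZ p N q" "N \<le> m" "p > 0"
  shows "q - (\<Sum>i\<in>{N..<m}. of_nat (rat_digit p q i) * of_nat p powi i)
           = of_int \<lfloor>q / of_nat p powi m\<rfloor> * of_nat p powi m"
  using assms(2)
proof (induction m rule: int_ge_induct)
  case base
  from assms(1) obtain z where z: "q = of_int z * of_nat p powi N" unfolding inZ_def by auto
  show ?case using assms(3) by (simp add: z)
next
  case (step m)
  let ?F = "\<lambda>m. \<lfloor>q / (of_nat p powi m :: rat)\<rfloor>"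
  have "{N..<m+1} = insert m {N..<m}" using step.hyps by auto
  hence "(\<Sum>i\<in>{N..<m+1}. of_nat (rat_digit p q i) * (of_nat p powi i :: rat))
       = of_nat (rat_digit p q m) * of_nat p powi m + (\<Sum>i\<in>{N..<m}. of_nat (rat_digit p q i) * of_nat p powi i)"
    by simp
  moreover have "of_nat (rat_digit p q m) = (of_int (?F m mod int p) :: rat)"
    unfolding rat_digit_def using assms(3) by simp
  moreover have "?F (m+1) = ?F m div int p"
  proof -
    have "(of_nat p::rat) powi (m+1) = of_nat p powi m * of_nat p"
      using assms(3) by (simp add: power_int_add_1)
    hence "q / of_nat p powi (m+1) = (q / of_nat p powi m) / of_nat p"
      by (simp add: divide_divide_eq_left)
    thus ?thesis using floor_div_nat_rat[OF assms(3), of "q / of_nat p powi m"] by (simp only:)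
  qed
  moreover have "(of_int (?F m) :: rat) = of_int (?F m div int p) * of_nat p + of_int (?F m mod int p)"
    by (metis of_int_add of_int_mult of_int_of_nat_eq div_mult_mod_eq)
  moreover have "(of_nat p::rat) powi (m+1) = of_nat p powi m * of_nat p"
      using assms(3) by (simp add: power_int_add_1)
  ultimately show ?case using step.IH
    by (simp add: algebra_simps)
qed

lemma digit_expansion_inZ:
  assumes "inZ p N q" "N \<le> m" "p > 0"
  shows "inZ p m (q - (\<Sum>i\<in>{N..<m}. of_nat (rat_digit p q i) * of_nat p powi i))"
  unfolding digit_expansion[OF assms] inZ_def by auto

section \<open>Truncations\<close>

lemma carrier_zb: "x \<in> padic_carrier p \<Longrightarrow> \<exists>N. zb N x"
  unfolding padic_carrier_def zb_def by auto

lemma zb_mono: "zb N x \<Longrightarrow> N' \<le> N \<Longrightarrow> zb N' x"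
  unfolding zb_def by auto

lemma carrier_zb_le: "x \<in> padic_carrier p \<Longrightarrow> \<exists>N\<le>K. zb N x"
  using carrier_zb zb_mono by (metis min.cobounded1 min.cobounded2)

lemma carrier_less: "x \<in> padic_carrier p \<Longrightarrow> x i < p"
  unfolding padic_carrier_def by auto

lemma trunc_eq_sum:
  assumes "zb N x"
  shows "padic_trunc p x k = (\<Sum>i\<in>{N..<k}. of_nat (x i) * of_nat p powi i)"
  unfolding padic_trunc_def
proof (rule sum.mono_neutral_left)
  show "{i. i < k \<and> x i \<noteq> 0} \<subseteq> {N..<k}" using assms unfolding zb_def by (auto simp: not_less[symmetric])
qed auto

lemma trunc_cong: "(\<And>i. i < k \<Longrightarrow> x i = y i) \<Longrightarrow> padic_trunc p x k = padic_trunc p y k"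
  unfolding padic_trunc_def by (rule sum.cong) auto

lemma trunc_below: "zb k x \<Longrightarrow> padic_trunc p x k = 0"
  unfolding padic_trunc_def zb_def by auto

lemma trunc_zero[simp]: "padic_trunc p padic_zero k = 0"
  unfolding padic_trunc_def padic_zero_def by simp

lemma trunc_Suc:
  assumes "zb N x"
  shows "padic_trunc p x (k + 1) = padic_trunc p x k + of_nat (x k) * of_nat p powi k"
proof -
  have z: "zb (min N k) x" using zb_mono[OF assms] by simp
  have "{min N k..<k+1} = insert k {min N k..<k}" by auto
  thus ?thesis unfolding trunc_eq_sum[OF z] by simp
qed

lemma trunc_inZ:
  assumes "zb N x" "p > 0" shows "inZ p N (padic_trunc p x k)"
  unfolding trunc_eq_sum[OF assms(1)]
proof (rule inZ_sum)
  fix i assume "i \<in> {N..<k}"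
  have "inZ p (0 + i) (of_nat (x i) * of_nat p powi i)"
    by (rule inZ_mult[OF inZ_of_nat inZ_powi assms(2)])
  thus "inZ p N (of_nat (x i) * of_nat p powi i)"
    using inZ_mono[OF _ _ assms(2)] \<open>i \<in> {N..<k}\<close> by simp
qed

lemma trunc_diff_inZ:
  assumes "zb N x" "k \<le> k'" "p > 0"
  shows "inZ p k (padic_trunc p x k' - padic_trunc p x k)"
  using assms(2)
proof (induction k' rule: int_ge_induct)
  case (step m)
  have "inZ p (0 + m) (of_nat (x m) * of_nat p powi m)"
    by (rule inZ_mult[OF inZ_of_nat inZ_powi assms(3)])
  hence "inZ p k (of_nat (x m) * of_nat p powi m)"
    using inZ_mono[OF _ _ assms(3)] step.hyps by simp
  then show ?case using step.IH trunc_Suc[OF assms(1), of p m]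
    by (metis (no_types, lifting) add_diff_eq diff_add_eq inZ_add)
qed simp

lemma trunc_bound:
  assumes "zb N x" "N \<le> k" "\<And>i. x i < p" "p > 0"
  shows "padic_trunc p x k + of_nat p powi N \<le> of_nat p powi k"
  using assms(2)
proof (induction k rule: int_ge_induct)
  case base
  show ?case using trunc_below[OF assms(1)] by simp
next
  case (step m)
  have "of_nat (x m) \<le> (of_nat p - 1 :: rat)" using assms(3)[of m] by (simp add: of_nat_diff[symmetric] less_Suc_eq_le[symmetric])
  hence "of_nat (x m) * of_nat p powi m \<le> (of_nat p - 1) * (of_nat p powi m :: rat)"
    using assms(4) by (intro mult_right_mono) auto
  thus ?case using step.IH trunc_Suc[OF assms(1), of p m] assms(4)
    by (simp add: power_int_add algebra_simps)
qed

lemma trunc_nonneg: "0 \<le> padic_trunc p x k"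
  unfolding padic_trunc_def by (intro sum_nonneg) auto

lemma trunc_less:
  assumes "x \<in> padic_carrier p" "p > 0"
  shows "padic_trunc p x k < of_nat p powi k"
proof -
  obtain N where N: "N \<le> k" "zb N x" using carrier_zb_le[OF assms(1)] by auto
  have "padic_trunc p x k + of_nat p powi N \<le> of_nat p powi k"
    by (rule trunc_bound[OF N(2) N(1)]) (use carrier_less[OF assms(1)] assms(2) in auto)
  moreover have "(0::rat) < of_nat p powi N" using assms(2) by simp
  ultimately show ?thesis by linarith
qed

lemma trunc_digit:
  assumes "x \<in> padic_carrier p" "i < k" "p > 0"
  shows "rat_digit p (padic_trunc p x k) i = x i"
proof -
  obtain N where N: "zb N x" using carrier_zb[OF assms(1)] by auto
  have "rat_digit p (padic_trunc p x k) i = rat_digit p (padic_trunc p x (i+1)) i"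
    by (rule rat_digit_cong[OF trunc_diff_inZ[OF N]]) (use assms in auto)
  also have "padic_trunc p x (i+1) = padic_trunc p x i + of_nat (x i) * of_nat p powi i"
    by (rule trunc_Suc[OF N])
  also have "rat_digit p \<dots> i = x i"
  proof -
    have lt: "padic_trunc p x i / of_nat p powi i < 1" "0 \<le> padic_trunc p x i / of_nat p powi i"
      using trunc_less[OF assms(1,3)] trunc_nonneg[of p x i] assms(3) by (auto simp: field_simps)
    have "(padic_trunc p x i + of_nat (x i) * of_nat p powi i) / of_nat p powi i
          = padic_trunc p x i / of_nat p powi i + of_int (int (x i))"
      using assms(3) by (simp add: field_simps)
    hence "\<lfloor>(padic_trunc p x i + of_nat (x i) * of_nat p powi i) / of_nat p powi i\<rfloor> = int (x i)"
      using lt by (simp add: floor_unique)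
    thus ?thesis unfolding rat_digit_def using carrier_less[OF assms(1), of i] by simp
  qed
  finally show ?thesis .
qed

lemma padic_eqI:
  assumes "x \<in> padic_carrier p" "y \<in> padic_carrier p" "p > 0"
    and "\<And>k. inZ p k (padic_trunc p x k - padic_trunc p y k)"
  shows "x = y"
proof
  fix i
  have "x i = rat_digit p (padic_trunc p x (i+1)) i" using trunc_digit[OF assms(1) _ assms(3)] by simp
  also have "\<dots> = rat_digit p (padic_trunc p y (i+1)) i"
    by (rule rat_digit_cong[OF assms(4)]) (use assms(3) in auto)
  also have "\<dots> = y i" using trunc_digit[OF assms(2) _ assms(3)] by simp
  finally show "x i = y i" .
qed

section \<open>Approximation limits\<close>

locale poa_seq =
  fixes p :: nat and q :: "nat \<Rightarrow> rat" and N :: int and C :: int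
  assumes p: "p > 0"
    and low: "\<And>m. inZ p N (q m)"
    and cauchy: "\<And>m m'. m \<le> m' \<Longrightarrow> inZ p (int m - C) (q m' - q m)"
begin

lemma digit:
  assumes "int m - C > i"
  shows "padic_of_approx p q i = rat_digit p (q m) i"
proof -
  let ?c = "rat_digit p (q m) i"
  have ev: "\<forall>\<^sub>F m' in sequentially. rat_digit p (q m') i = ?c"
    unfolding eventually_sequentially
  proof (intro exI allI impI)
    fix m' assume "m \<le> m'"
    show "rat_digit p (q m') i = ?c"
      by (rule rat_digit_cong[OF cauchy[OF \<open>m \<le> m'\<close>]]) (use assms p in auto)
  qed
  show ?thesis unfolding padic_of_approx_def
  proof (rule the_equality)
    fix c assume "\<forall>\<^sub>F m in sequentially. rat_digit p (q m) i = c"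
    with ev have "\<forall>\<^sub>F m in sequentially. c = ?c" by eventually_elim auto
    thus "c = ?c" by simp
  qed (rule ev)
qed

lemma digit_ex: "\<exists>m. padic_of_approx p q i = rat_digit p (q m) i"
  using digit[of i "nat (i + C + 1)"] by auto

lemma carrier: "padic_of_approx p q \<in> padic_carrier p"
  unfolding padic_carrier_def
proof (intro CollectI conjI allI impI exI[of _ N])
  fix i show "padic_of_approx p q i < p" using digit_ex[of i] rat_digit_less[OF p] by metis
next
  fix i assume "i < N"
  thus "padic_of_approx p q i = 0" using digit_ex[of i] rat_digit_low[OF low _ p] by metis
qed

lemma zb: "zb N (padic_of_approx p q)"
  unfolding zb_def using digit_ex rat_digit_low[OF low _ p] by metis

lemma trunc:
  assumes "int M - C \<ge> k"
  shows "inZ p k (padic_trunc p (padic_of_approx p q) k - q M)"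
proof (cases "k \<le> N")
  case True
  hence "padic_trunc p (padic_of_approx p q) k = 0"
    using trunc_below[OF zb_mono[OF zb True]] by simp
  thus ?thesis using inZ_mono[OF low True p] inZ_minus by simp
next
  case False
  hence "padic_trunc p (padic_of_approx p q) k
        = (\<Sum>i\<in>{N..<k}. of_nat (rat_digit p (q M) i) * of_nat p powi i)"
    unfolding trunc_eq_sum[OF zb] using assms by (intro sum.cong refl) (auto simp: digit)
  thus ?thesis using inZ_minus[OF digit_expansion_inZ[OF low, of k M]] False p by simp
qed

end

lemma zero_carrier[simp]: "p > 0 \<Longrightarrow> padic_zero \<in> padic_carrier p"
  unfolding padic_carrier_def padic_zero_def by auto

lemma one_carrier: "p > 1 \<Longrightarrow> padic_one \<in> padic_carrier p"
  unfolding padic_carrier_def padic_one_def by (auto intro: exI[of _ 0])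

lemma zb_zero[simp]: "zb N padic_zero"
  unfolding zb_def padic_zero_def by auto

lemma zb_one: "zb 0 padic_one"
  unfolding zb_def padic_one_def by auto

lemma trunc_one: "padic_trunc p padic_one k = (if k > 0 then 1 else 0)"
proof -
  have "{i. i < k \<and> padic_one i \<noteq> 0} = (if k > 0 then {0} else {})"
    unfolding padic_one_def by auto
  thus ?thesis unfolding padic_trunc_def by (simp add: padic_one_def)
qed

lemma trunc_diff_inZ':
  assumes "x \<in> padic_carrier p" "k \<le> k'" "p > 0"
  shows "inZ p k (padic_trunc p x k' - padic_trunc p x k)"
  using carrier_zb[OF assms(1)] trunc_diff_inZ assms by blast

lemma add_poa:
  assumes "a \<in> padic_carrier p" "b \<in> padic_carrier p" "p > 0"
    and "zb Na a" "zb Nb b"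
  shows "poa_seq p (\<lambda>m. padic_trunc p a (int m) + padic_trunc p b (int m)) (min Na Nb) 0"
proof
  fix m show "inZ p (min Na Nb) (padic_trunc p a (int m) + padic_trunc p b (int m))"
    using trunc_inZ[OF zb_mono[OF assms(4)] assms(3)] trunc_inZ[OF zb_mono[OF assms(5)] assms(3)]
    by (intro inZ_add) auto
next
  fix m m' :: nat assume "m \<le> m'"
  thus "inZ p (int m - 0) (padic_trunc p a (int m') + padic_trunc p b (int m') -
          (padic_trunc p a (int m) + padic_trunc p b (int m)))"
    using trunc_diff_inZ'[OF assms(1) _ assms(3), of "int m" "int m'"]
      trunc_diff_inZ'[OF assms(2) _ assms(3), of "int m" "int m'"]
    by (simp add: diff_add_eq add_diff_eq inZ_add diff_diff_eq2 algebra_simps)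
      (metis (no_types, lifting) add_diff_eq diff_diff_eq2 inZ_add diff_add_eq)
qed (use assms in auto)

lemma add_carrier:
  assumes "a \<in> padic_carrier p" "b \<in> padic_carrier p" "p > 0"
  shows "padic_add p a b \<in> padic_carrier p"
proof -
  obtain Na Nb where "zb Na a" "zb Nb b" using carrier_zb assms by metis
  from poa_seq.carrier[OF add_poa[OF assms this]] show ?thesis unfolding padic_add_def .
qed

lemma add_zb:
  assumes "a \<in> padic_carrier p" "b \<in> padic_carrier p" "p > 0" "zb N a" "zb N b"
  shows "zb N (padic_add p a b)"
  using poa_seq.zb[OF add_poa[OF assms]] unfolding padic_add_def by simp

lemma add_trunc:
  assumes "a \<in> padic_carrier p" "b \<in> padic_carrier p" "p > 0" "k \<le> k1" "k \<le> k2"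
  shows "inZ p k (padic_trunc p (padic_add p a b) k - (padic_trunc p a k1 + padic_trunc p b k2))"
proof -
  obtain Na Nb where z: "zb Na a" "zb Nb b" using carrier_zb assms by metis
  define M where "M = nat (max (max k1 k2) 0)"
  have M: "k1 \<le> int M" "k2 \<le> int M" "k \<le> int M - 0" using assms unfolding M_def by auto
  have 1: "inZ p k (padic_trunc p (padic_add p a b) k - (padic_trunc p a (int M) + padic_trunc p b (int M)))"
    using poa_seq.trunc[OF add_poa[OF assms(1-3) z] M(3)] unfolding padic_add_def .
  have 2: "inZ p k (padic_trunc p a (int M) - padic_trunc p a k1)"
    using inZ_mono[OF trunc_diff_inZ'[OF assms(1) M(1) assms(3)] assms(4) assms(3)] .
  have 3: "inZ p k (padic_trunc p b (int M) - padic_trunc p b k2)"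
    using inZ_mono[OF trunc_diff_inZ'[OF assms(2) M(2) assms(3)] assms(5) assms(3)] .
  have "inZ p k ((padic_trunc p (padic_add p a b) k - (padic_trunc p a (int M) + padic_trunc p b (int M)))
     + (padic_trunc p a (int M) - padic_trunc p a k1) + (padic_trunc p b (int M) - padic_trunc p b k2))"
    using inZ_add[OF inZ_add[OF 1 2] 3] .
  thus ?thesis by (simp add: algebra_simps)
qed

lemma prod_trunc_diff:
  assumes "zb Na a" "zb Nb b" "k1 \<le> k1'" "k2 \<le> k2'" "p > 0"
    and "k \<le> k1 + Nb" "k \<le> Na + k2"
  shows "inZ p k (padic_trunc p a k1' * padic_trunc p b k2' - padic_trunc p a k1 * padic_trunc p b k2)"
proof -
  have e: "padic_trunc p a k1' * padic_trunc p b k2' - padic_trunc p a k1 * padic_trunc p b k2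
    = (padic_trunc p a k1' - padic_trunc p a k1) * padic_trunc p b k2'
      + padic_trunc p a k1 * (padic_trunc p b k2' - padic_trunc p b k2)"
    by (simp add: algebra_simps)
  have "inZ p (k1 + Nb) ((padic_trunc p a k1' - padic_trunc p a k1) * padic_trunc p b k2')"
    by (rule inZ_mult[OF trunc_diff_inZ[OF assms(1,3,5)] trunc_inZ[OF assms(2,5)] assms(5)])
  moreover have "inZ p (Na + k2) (padic_trunc p a k1 * (padic_trunc p b k2' - padic_trunc p b k2))"
    by (rule inZ_mult[OF trunc_inZ[OF assms(1,5)] trunc_diff_inZ[OF assms(2,4,5)] assms(5)])
  ultimately show ?thesis unfolding e using inZ_mono assms(5-7) by (metis inZ_add)
qed

lemma mult_poa:
  assumes "p > 0" "zb Na a" "zb Nb b" "Na \<le> 0" "Nb \<le> 0"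
  shows "poa_seq p (\<lambda>m. padic_trunc p a (int m) * padic_trunc p b (int m)) (Na + Nb) (- (Na + Nb))"
proof
  fix m show "inZ p (Na + Nb) (padic_trunc p a (int m) * padic_trunc p b (int m))"
    by (rule inZ_mult[OF trunc_inZ[OF assms(2,1)] trunc_inZ[OF assms(3,1)] assms(1)])
next
  fix m m' :: nat assume "m \<le> m'"
  show "inZ p (int m - - (Na + Nb)) (padic_trunc p a (int m') * padic_trunc p b (int m') -
          padic_trunc p a (int m) * padic_trunc p b (int m))"
    by (rule prod_trunc_diff[OF assms(2,3)]) (use \<open>m \<le> m'\<close> assms in auto)
qed (use assms in auto)

lemma carrier_zb_nonpos: "x \<in> padic_carrier p \<Longrightarrow> \<exists>N\<le>0. zb N x"
  using carrier_zb_le by blast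

lemma mult_carrier:
  assumes "a \<in> padic_carrier p" "b \<in> padic_carrier p" "p > 0"
  shows "padic_mult p a b \<in> padic_carrier p"
proof -
  obtain Na Nb where "zb Na a" "zb Nb b" "Na \<le> 0" "Nb \<le> 0" using carrier_zb_nonpos assms by metis
  from poa_seq.carrier[OF mult_poa[OF assms(3) this]] show ?thesis unfolding padic_mult_def .
qed

lemma mult_zb:
  assumes "p > 0" "zb Na a" "zb Nb b" "Na \<le> 0" "Nb \<le> 0"
  shows "zb (Na + Nb) (padic_mult p a b)"
  using poa_seq.zb[OF mult_poa[OF assms]] unfolding padic_mult_def .

lemma mult_trunc:
  assumes "a \<in> padic_carrier p" "b \<in> padic_carrier p" "p > 0"
  shows "\<exists>K\<ge>0. \<forall>k k1 k2. k + K \<le> k1 \<longrightarrow> k + K \<le> k2 \<longrightarrow>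
           inZ p k (padic_trunc p (padic_mult p a b) k - padic_trunc p a k1 * padic_trunc p b k2)"
proof -
  obtain Na Nb where z: "zb Na a" "zb Nb b" "Na \<le> 0" "Nb \<le> 0" using carrier_zb_nonpos assms by metis
  show ?thesis
  proof (intro exI[of _ "- (Na + Nb)"] conjI allI impI)
    fix k k1 k2 assume k: "k + - (Na + Nb) \<le> k1" "k + - (Na + Nb) \<le> k2"
    define M where "M = nat (max (max k1 k2) 0)"
    have M: "k1 \<le> int M" "k2 \<le> int M" "k \<le> int M - - (Na + Nb)" using k z unfolding M_def by auto
    have 1: "inZ p k (padic_trunc p (padic_mult p a b) k - padic_trunc p a (int M) * padic_trunc p b (int M))"
      using poa_seq.trunc[OF mult_poa[OF assms(3) z] M(3)] unfolding padic_mult_def .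
    have 2: "inZ p k (padic_trunc p a (int M) * padic_trunc p b (int M) - padic_trunc p a k1 * padic_trunc p b k2)"
      by (rule prod_trunc_diff[OF z(1,2) M(1,2) assms(3)]) (use k z in auto)
    show "inZ p k (padic_trunc p (padic_mult p a b) k - padic_trunc p a k1 * padic_trunc p b k2)"
      using inZ_add[OF 1 2] by simp
  qed (use z in auto)
qed

section \<open>Ring laws\<close>

lemma add_comm: "padic_add p a b = padic_add p b a"
  unfolding padic_add_def by (simp add: add.commute)

lemma mult_comm: "padic_mult p a b = padic_mult p b a"
  unfolding padic_mult_def by (simp add: mult.commute)

lemma add_zero_right:
  assumes "a \<in> padic_carrier p" "p > 0"
  shows "padic_add p a padic_zero = a"
  by (rule padic_eqI[OF add_carrier[OF assms(1) zero_carrier[OF assms(2)] assms(2)] assms(1) assms(2)])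
    (use add_trunc[OF assms(1) zero_carrier[OF assms(2)] assms(2), of k k k for k] in simp)

lemma add_zero_left:
  assumes "a \<in> padic_carrier p" "p > 0"
  shows "padic_add p padic_zero a = a"
  using add_zero_right[OF assms] add_comm by metis

lemma add_assoc:
  assumes "a \<in> padic_carrier p" "b \<in> padic_carrier p" "c \<in> padic_carrier p" "p > 0"
  shows "padic_add p (padic_add p a b) c = padic_add p a (padic_add p b c)"
proof (rule padic_eqI)
  fix k
  let ?t = "padic_trunc p"
  have ab: "padic_add p a b \<in> padic_carrier p" and bc: "padic_add p b c \<in> padic_carrier p"
    using add_carrier assms by auto
  have 1: "inZ p k (?t (padic_add p (padic_add p a b) c) k - (?t (padic_add p a b) k + ?t c k))"
    by (rule add_trunc[OF ab assms(3,4)]) auto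
  have 2: "inZ p k (?t (padic_add p a b) k - (?t a k + ?t b k))"
    by (rule add_trunc[OF assms(1,2,4)]) auto
  have 3: "inZ p k (?t (padic_add p a (padic_add p b c)) k - (?t a k + ?t (padic_add p b c) k))"
    by (rule add_trunc[OF assms(1) bc assms(4)]) auto
  have 4: "inZ p k (?t (padic_add p b c) k - (?t b k + ?t c k))"
    by (rule add_trunc[OF assms(2,3,4)]) auto
  have "inZ p k ((?t (padic_add p (padic_add p a b) c) k - (?t (padic_add p a b) k + ?t c k))
      + (?t (padic_add p a b) k - (?t a k + ?t b k))
      - (?t (padic_add p a (padic_add p b c)) k - (?t a k + ?t (padic_add p b c) k))
      - (?t (padic_add p b c) k - (?t b k + ?t c k)))"
    using inZ_diff[OF inZ_diff[OF inZ_add[OF 1 2] 3] 4] .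
  thus "inZ p k (?t (padic_add p (padic_add p a b) c) k - ?t (padic_add p a (padic_add p b c)) k)"
    by (simp add: algebra_simps)
qed (use add_carrier assms in auto)

definition padic_neg :: "nat \<Rightarrow> padic \<Rightarrow> padic" where
  "padic_neg p a = padic_of_approx p (\<lambda>m. of_nat p powi (int m) - padic_trunc p a (int m))"

lemma neg_poa:
  assumes "a \<in> padic_carrier p" "p > 0" "zb N a" "N \<le> 0"
  shows "poa_seq p (\<lambda>m. of_nat p powi (int m) - padic_trunc p a (int m)) N 0"
proof
  fix m :: nat
  show "inZ p N (of_nat p powi (int m) - padic_trunc p a (int m))"
  proof (rule inZ_diff)
    show "inZ p N (of_nat p powi (int m))" by (rule inZ_mono[OF inZ_powi _ assms(2)]) (use assms in auto)
  qed (rule trunc_inZ[OF assms(3,2)])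
next
  fix m m' :: nat assume "m \<le> m'"
  have 1: "inZ p (int m) (of_nat p powi (int m') - of_nat p powi (int m))"
  proof (rule inZ_diff)
    show "inZ p (int m) (of_nat p powi (int m'))" by (rule inZ_mono[OF inZ_powi _ assms(2)]) (use \<open>m \<le> m'\<close> in auto)
  qed (rule inZ_powi)
  have 2: "inZ p (int m) (padic_trunc p a (int m') - padic_trunc p a (int m))"
    using trunc_diff_inZ[OF assms(3)] \<open>m \<le> m'\<close> assms by auto
  show "inZ p (int m - 0) (of_nat p powi (int m') - padic_trunc p a (int m') -
          (of_nat p powi (int m) - padic_trunc p a (int m)))"
    using inZ_diff[OF 1 2] by (simp add: algebra_simps)
qed (use assms in auto)

lemma neg_carrier:
  assumes "a \<in> padic_carrier p" "p > 0"
  shows "padic_neg p a \<in> padic_carrier p"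
proof -
  obtain N where "zb N a" "N \<le> 0" using carrier_zb_nonpos assms by metis
  from poa_seq.carrier[OF neg_poa[OF assms this]] show ?thesis unfolding padic_neg_def .
qed

lemma add_neg:
  assumes "a \<in> padic_carrier p" "p > 0"
  shows "padic_add p a (padic_neg p a) = padic_zero"
proof (rule padic_eqI)
  obtain N where z: "zb N a" "N \<le> 0" using carrier_zb_nonpos assms by metis
  fix k
  let ?t = "padic_trunc p"
  define M where "M = nat (max k 0)"
  have M: "k \<le> int M - 0" unfolding M_def by auto
  have 1: "inZ p k (?t (padic_add p a (padic_neg p a)) k - (?t a (int M) + ?t (padic_neg p a) k))"
    by (rule add_trunc[OF assms(1) neg_carrier[OF assms] assms(2)]) (use M in auto)
  have 2: "inZ p k (?t (padic_neg p a) k - (of_nat p powi (int M) - ?t a (int M)))"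
    using poa_seq.trunc[OF neg_poa[OF assms z] M] unfolding padic_neg_def .
  have 3: "inZ p k (of_nat p powi (int M))" by (rule inZ_mono[OF inZ_powi _ assms(2)]) (use M in simp)
  have "inZ p k ((?t (padic_add p a (padic_neg p a)) k - (?t a (int M) + ?t (padic_neg p a) k))
     + (?t (padic_neg p a) k - (of_nat p powi (int M) - ?t a (int M))) + of_nat p powi (int M))"
    using inZ_add[OF inZ_add[OF 1 2] 3] .
  thus "inZ p k (?t (padic_add p a (padic_neg p a)) k - ?t padic_zero k)" by (simp add: algebra_simps)
qed (use add_carrier neg_carrier assms zero_carrier in auto)

lemma mult_zero_right[simp]: "padic_mult p a padic_zero = padic_zero"
  unfolding padic_mult_def trunc_zero by (simp add: padic_of_approx_def padic_zero_def)

lemma mult_zero_left[simp]: "padic_mult p padic_zero a = padic_zero"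
  using mult_zero_right mult_comm by metis

lemma mult_one_right:
  assumes "a \<in> padic_carrier p" "p > 1"
  shows "padic_mult p a padic_one = a"
proof (rule padic_eqI)
  fix k
  obtain K where K: "K \<ge> 0" "\<forall>k k1 k2. k + K \<le> k1 \<longrightarrow> k + K \<le> k2 \<longrightarrow>
           inZ p k (padic_trunc p (padic_mult p a padic_one) k - padic_trunc p a k1 * padic_trunc p padic_one k2)"
    using mult_trunc[OF assms(1) one_carrier[OF assms(2)]] assms(2) by auto
  have 1: "inZ p k (padic_trunc p (padic_mult p a padic_one) k - padic_trunc p a (k + K) * padic_trunc p padic_one (max (k + K) 1))"
    using K by auto
  have "padic_trunc p padic_one (max (k + K) 1) = 1" by (simp add: trunc_one)
  with 1 have 1: "inZ p k (padic_trunc p (padic_mult p a padic_one) k - padic_trunc p a (k + K))" by simp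
  have 2: "inZ p k (padic_trunc p a (k + K) - padic_trunc p a k)"
    using trunc_diff_inZ'[OF assms(1)] K assms(2) by auto
  show "inZ p k (padic_trunc p (padic_mult p a padic_one) k - padic_trunc p a k)"
    using inZ_add[OF 1 2] by (simp add: trunc_one)
qed (use mult_carrier one_carrier assms in auto)

lemma mult_one_left:
  assumes "a \<in> padic_carrier p" "p > 1"
  shows "padic_mult p padic_one a = a"
  using mult_one_right[OF assms] mult_comm by metis

lemma distrib_left:
  assumes "x \<in> padic_carrier p" "a \<in> padic_carrier p" "b \<in> padic_carrier p" "p > 0"
  shows "padic_mult p x (padic_add p a b) = padic_add p (padic_mult p x a) (padic_mult p x b)"
proof (rule padic_eqI)
  fix k
  let ?t = "padic_trunc p"
  have ab: "padic_add p a b \<in> padic_carrier p" using add_carrier assms by auto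
  have xa: "padic_mult p x a \<in> padic_carrier p" and xb: "padic_mult p x b \<in> padic_carrier p"
    using mult_carrier assms by auto
  obtain Nx where Nx: "zb Nx x" "Nx \<le> 0" using carrier_zb_nonpos assms by metis
  obtain K1 where K1: "K1 \<ge> 0" "\<forall>k k1 k2. k + K1 \<le> k1 \<longrightarrow> k + K1 \<le> k2 \<longrightarrow>
           inZ p k (?t (padic_mult p x (padic_add p a b)) k - ?t x k1 * ?t (padic_add p a b) k2)"
    using mult_trunc[OF assms(1) ab assms(4)] by auto
  obtain K2 where K2: "K2 \<ge> 0" "\<forall>k k1 k2. k + K2 \<le> k1 \<longrightarrow> k + K2 \<le> k2 \<longrightarrow>
           inZ p k (?t (padic_mult p x a) k - ?t x k1 * ?t a k2)"
    using mult_trunc[OF assms(1,2,4)] by auto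
  obtain K3 where K3: "K3 \<ge> 0" "\<forall>k k1 k2. k + K3 \<le> k1 \<longrightarrow> k + K3 \<le> k2 \<longrightarrow>
           inZ p k (?t (padic_mult p x b) k - ?t x k1 * ?t b k2)"
    using mult_trunc[OF assms(1,3,4)] by auto
  define L where "L = k + K1 + K2 + K3 - Nx"
  have 1: "inZ p k (?t (padic_mult p x (padic_add p a b)) k - ?t x L * ?t (padic_add p a b) L)"
    using K1 K2 K3 Nx unfolding L_def by auto
  have "inZ p L (?t (padic_add p a b) L - (?t a L + ?t b L))"
    by (rule add_trunc[OF assms(2,3,4)]) auto
  hence "inZ p (Nx + L) (?t x L * (?t (padic_add p a b) L - (?t a L + ?t b L)))"
    by (rule inZ_mult[OF trunc_inZ[OF Nx(1) assms(4)] _ assms(4)])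
  hence 2: "inZ p k (?t x L * (?t (padic_add p a b) L - (?t a L + ?t b L)))"
    by (rule inZ_mono[OF _ _ assms(4)]) (use K1 K2 K3 L_def in auto)
  have 3: "inZ p k (?t (padic_add p (padic_mult p x a) (padic_mult p x b)) k - (?t (padic_mult p x a) k + ?t (padic_mult p x b) k))"
    by (rule add_trunc[OF xa xb assms(4)]) auto
  have 4: "inZ p k (?t (padic_mult p x a) k - ?t x L * ?t a L)"
    using K2 K1 K3 Nx unfolding L_def by auto
  have 5: "inZ p k (?t (padic_mult p x b) k - ?t x L * ?t b L)"
    using K2 K1 K3 Nx unfolding L_def by auto
  have "inZ p k ((?t (padic_mult p x (padic_add p a b)) k - ?t x L * ?t (padic_add p a b) L)
     + ?t x L * (?t (padic_add p a b) L - (?t a L + ?t b L))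
     - (?t (padic_add p (padic_mult p x a) (padic_mult p x b)) k - (?t (padic_mult p x a) k + ?t (padic_mult p x b) k))
     - (?t (padic_mult p x a) k - ?t x L * ?t a L) - (?t (padic_mult p x b) k - ?t x L * ?t b L))"
    using inZ_diff[OF inZ_diff[OF inZ_diff[OF inZ_add[OF 1 2] 3] 4] 5] .
  thus "inZ p k (?t (padic_mult p x (padic_add p a b)) k - ?t (padic_add p (padic_mult p x a) (padic_mult p x b)) k)"
    by (simp add: algebra_simps)
qed (use add_carrier mult_carrier assms in auto)

lemma powi_le_iff: "(1::'a::linordered_field) < x \<Longrightarrow> x powi a \<le> x powi b \<longleftrightarrow> a \<le> b"
  by (metis linorder_not_le power_int_increasing less_imp_le power_int_strict_increasing)

lemma powi_less_iff: "(1::'a::linordered_field) < x \<Longrightarrow> x powi a < x powi b \<longleftrightarrow> a < b"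
  by (metis linorder_not_le powi_le_iff)

section \<open>Shifts\<close>

definition psh :: "int \<Rightarrow> padic \<Rightarrow> padic" where
  "psh k y = (\<lambda>i. y (i - k))"

lemma psh_0[simp]: "psh 0 y = y" unfolding psh_def by simp
lemma psh_psh[simp]: "psh j (psh k y) = psh (j + k) y" unfolding psh_def by (simp add: algebra_simps)
lemma psh_zero[simp]: "psh k padic_zero = padic_zero" unfolding psh_def padic_zero_def by simp
lemma psh_eq_zero_iff[simp]: "psh k y = padic_zero \<longleftrightarrow> y = padic_zero"
proof
  assume h: "psh k y = padic_zero"
  show "y = padic_zero"
  proof
    fix i
    have "psh k y (i + k) = 0" using h by (simp add: padic_zero_def)
    thus "y i = padic_zero i" by (simp add: psh_def padic_zero_def)
  qed
qed simp

lemma psh_carrier: "y \<in> padic_carrier p \<Longrightarrow> psh k y \<in> padic_carrier p"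
proof -
  assume y: "y \<in> padic_carrier p"
  then obtain N where "\<forall>i<N. y i = 0" unfolding padic_carrier_def by auto
  hence "\<forall>i<N+k. psh k y i = 0" unfolding psh_def by auto
  thus ?thesis using y unfolding padic_carrier_def psh_def by auto
qed

lemma zb_psh: "zb N y \<Longrightarrow> zb (N + k) (psh k y)"
  unfolding zb_def psh_def by auto

lemma zb_psh_iff: "zb (N + k) (psh k y) \<longleftrightarrow> zb N y"
proof
  assume "zb (N + k) (psh k y)"
  thus "zb N y" unfolding zb_def psh_def
  proof (intro allI impI)
    fix i assume a: "\<forall>i<N + k. y (i - k) = 0" "i < N"
    from a(1)[rule_format, of "i + k"] a(2) show "y i = 0" by simp
  qed
qed (rule zb_psh)

lemma trunc_psh:
  assumes "p > 0"
  shows "padic_trunc p (psh k y) m = of_nat p powi k * padic_trunc p y (m - k)"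
proof -
  have e: "{i. i < m \<and> psh k y i \<noteq> 0} = (\<lambda>j. j + k) ` {j. j < m - k \<and> y j \<noteq> 0}"
  proof (intro set_eqI iffI)
    fix i assume "i \<in> {i. i < m \<and> psh k y i \<noteq> 0}"
    thus "i \<in> (\<lambda>j. j + k) ` {j. j < m - k \<and> y j \<noteq> 0}"
      unfolding psh_def by (intro image_eqI[of _ _ "i - k"]) auto
  qed (auto simp: psh_def)
  have "padic_trunc p (psh k y) m = (\<Sum>j\<in>{j. j < m - k \<and> y j \<noteq> 0}. of_nat (y j) * of_nat p powi (j + k))"
    unfolding padic_trunc_def e by (subst sum.reindex) (auto simp: inj_on_def psh_def)
  also have "\<dots> = of_nat p powi k * padic_trunc p y (m - k)"
    unfolding padic_trunc_def sum_distrib_left using assms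
    by (intro sum.cong refl) (simp add: power_int_add)
  finally show ?thesis .
qed

lemma psh_add:
  assumes "a \<in> padic_carrier p" "b \<in> padic_carrier p" "p > 0"
  shows "padic_add p (psh k a) (psh k b) = psh k (padic_add p a b)"
proof (rule padic_eqI)
  fix m
  let ?t = "padic_trunc p"
  have 1: "inZ p m (?t (padic_add p (psh k a) (psh k b)) m - (?t (psh k a) m + ?t (psh k b) m))"
    by (rule add_trunc[OF psh_carrier[OF assms(1)] psh_carrier[OF assms(2)] assms(3)]) auto
  have "inZ p (m - k) (?t (padic_add p a b) (m - k) - (?t a (m - k) + ?t b (m - k)))"
    by (rule add_trunc[OF assms]) auto
  hence 2: "inZ p (m - k + k) (of_nat p powi k * (?t (padic_add p a b) (m - k) - (?t a (m - k) + ?t b (m - k))))"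
    by (rule inZ_scale[OF _ assms(3)])
  hence 2: "inZ p m (of_nat p powi k * (?t (padic_add p a b) (m - k) - (?t a (m - k) + ?t b (m - k))))" by simp
  show "inZ p m (?t (padic_add p (psh k a) (psh k b)) m - ?t (psh k (padic_add p a b)) m)"
    using inZ_diff[OF 1 2] unfolding trunc_psh[OF assms(3)] by (simp add: algebra_simps)
qed (use assms psh_carrier add_carrier in auto)

lemma psh_mult:
  assumes "a \<in> padic_carrier p" "b \<in> padic_carrier p" "p > 0"
  shows "padic_mult p (psh j a) (psh k b) = psh (j + k) (padic_mult p a b)"
proof (rule padic_eqI)
  fix m
  let ?t = "padic_trunc p"
  obtain K where K: "K \<ge> 0" "\<forall>m k1 k2. m + K \<le> k1 \<longrightarrow> m + K \<le> k2 \<longrightarrow>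
      inZ p m (?t (padic_mult p (psh j a) (psh k b)) m - ?t (psh j a) k1 * ?t (psh k b) k2)"
    using mult_trunc[OF psh_carrier[OF assms(1), of j] psh_carrier[OF assms(2), of k] assms(3)] by auto
  obtain K' where K': "K' \<ge> 0" "\<forall>m k1 k2. m + K' \<le> k1 \<longrightarrow> m + K' \<le> k2 \<longrightarrow>
      inZ p m (?t (padic_mult p a b) m - ?t a k1 * ?t b k2)"
    using mult_trunc[OF assms] by auto
  define L where "L = m + K + K' + \<bar>j\<bar> + \<bar>k\<bar>"
  have 1: "inZ p m (?t (padic_mult p (psh j a) (psh k b)) m - ?t (psh j a) L * ?t (psh k b) L)"
    using K K' unfolding L_def by auto
  have "inZ p (m - (j + k)) (?t (padic_mult p a b) (m - (j + k)) - ?t a (L - j) * ?t b (L - k))"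
    using K K' unfolding L_def by auto
  hence 2: "inZ p (m - (j + k) + (j + k)) (of_nat p powi (j + k) * (?t (padic_mult p a b) (m - (j + k)) - ?t a (L - j) * ?t b (L - k)))"
    by (rule inZ_scale[OF _ assms(3)])
  hence 2: "inZ p m (of_nat p powi (j + k) * (?t (padic_mult p a b) (m - (j + k)) - ?t a (L - j) * ?t b (L - k)))" by simp
  have pw: "(of_nat p :: rat) powi (j + k) = of_nat p powi j * of_nat p powi k"
    using assms(3) by (simp add: power_int_add)
  show "inZ p m (?t (padic_mult p (psh j a) (psh k b)) m - ?t (psh (j + k) (padic_mult p a b)) m)"
    using inZ_diff[OF 1 2] unfolding trunc_psh[OF assms(3)] pw by (simp add: algebra_simps)
qed (use assms psh_carrier mult_carrier in auto)

lemma add_disjoint: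
  assumes "a \<in> padic_carrier p" "b \<in> padic_carrier p" "p > 0" "\<And>i. a i = 0 \<or> b i = 0"
  shows "padic_add p a b = (\<lambda>i. a i + b i)"
proof -
  obtain Na Nb where z: "zb Na a" "zb Nb b" using carrier_zb assms by metis
  let ?N = "min Na Nb"
  have z': "zb ?N a" "zb ?N b" using z zb_mono by auto
  have zs: "zb ?N (\<lambda>i. a i + b i)" using z' unfolding zb_def by auto
  have c: "(\<lambda>i. a i + b i) \<in> padic_carrier p"
    using zs assms(4) carrier_less[OF assms(1)] carrier_less[OF assms(2)]
    unfolding padic_carrier_def zb_def by (auto intro!: exI[of _ ?N]) (metis add_0 add_0_right)
  have tr: "padic_trunc p (\<lambda>i. a i + b i) k = padic_trunc p a k + padic_trunc p b k" for k
    unfolding trunc_eq_sum[OF zs] trunc_eq_sum[OF z'(1)] trunc_eq_sum[OF z'(2)]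
    by (simp add: sum.distrib[symmetric] algebra_simps)
  show ?thesis
    by (rule padic_eqI[OF add_carrier[OF assms(1-3)] c assms(3)])
      (use add_trunc[OF assms(1-3)] in \<open>simp add: tr\<close>)
qed

definition zp :: "nat \<Rightarrow> padic \<Rightarrow> bool" where
  "zp p y \<longleftrightarrow> y \<in> padic_carrier p \<and> zb 0 y"

lemma zp_add: "zp p a \<Longrightarrow> zp p b \<Longrightarrow> p > 0 \<Longrightarrow> zp p (padic_add p a b)"
  unfolding zp_def using add_carrier add_zb by blast

lemma zp_mult: "zp p a \<Longrightarrow> zp p b \<Longrightarrow> p > 0 \<Longrightarrow> zp p (padic_mult p a b)"
  unfolding zp_def using mult_carrier mult_zb[of p 0 a 0 b] by auto

lemma zp_zero: "p > 0 \<Longrightarrow> zp p padic_zero" unfolding zp_def by simp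
lemma zp_one: "p > 1 \<Longrightarrow> zp p padic_one" unfolding zp_def using one_carrier zb_one by auto

lemma zp_add_cong:
  assumes "zp p a" "zp p b" "zp p a'" "zp p b'" "p > 0"
    and "\<And>i. i < m \<Longrightarrow> a i = a' i" "\<And>i. i < m \<Longrightarrow> b i = b' i" "i < m"
  shows "padic_add p a b i = padic_add p a' b' i"
proof (cases "i < 0")
  case True
  thus ?thesis using zp_add[OF assms(1,2,5)] zp_add[OF assms(3,4,5)] unfolding zp_def zb_def by auto
next
  case False
  hence m: "int (nat m) - 0 > i" using assms(8) by auto
  have c: "a \<in> padic_carrier p" "b \<in> padic_carrier p" "a' \<in> padic_carrier p" "b' \<in> padic_carrier p"
    "zb 0 a" "zb 0 b" "zb 0 a'" "zb 0 b'" using assms unfolding zp_def by auto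
  have "padic_add p a b i = rat_digit p (padic_trunc p a (int (nat m)) + padic_trunc p b (int (nat m))) i"
    using poa_seq.digit[OF add_poa[OF c(1,2) assms(5) c(5,6)] m] unfolding padic_add_def by simp
  also have "\<dots> = rat_digit p (padic_trunc p a' (int (nat m)) + padic_trunc p b' (int (nat m))) i"
    using False assms(8) by (subst trunc_cong[of _ a a'], simp add: assms(6), subst trunc_cong[of _ b b'])
      (auto simp: assms(7))
  also have "\<dots> = padic_add p a' b' i"
    using poa_seq.digit[OF add_poa[OF c(3,4) assms(5) c(7,8)] m] unfolding padic_add_def by simp
  finally show ?thesis .
qed

lemma zp_mult_cong:
  assumes "zp p a" "zp p b" "zp p a'" "zp p b'" "p > 0"
    and "\<And>i. i < m \<Longrightarrow> a i = a' i" "\<And>i. i < m \<Longrightarrow> b i = b' i" "i < m"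
  shows "padic_mult p a b i = padic_mult p a' b' i"
proof (cases "i < 0")
  case True
  thus ?thesis using zp_mult[OF assms(1,2,5)] zp_mult[OF assms(3,4,5)] unfolding zp_def zb_def by auto
next
  case False
  hence m: "int (nat m) - - (0 + 0) > i" using assms(8) by auto
  have c: "a \<in> padic_carrier p" "b \<in> padic_carrier p" "a' \<in> padic_carrier p" "b' \<in> padic_carrier p"
    "zb 0 a" "zb 0 b" "zb 0 a'" "zb 0 b'" using assms unfolding zp_def by auto
  have "padic_mult p a b i = rat_digit p (padic_trunc p a (int (nat m)) * padic_trunc p b (int (nat m))) i"
    using poa_seq.digit[OF mult_poa[OF assms(5) c(5,6)] m] unfolding padic_mult_def by simp
  also have "\<dots> = rat_digit p (padic_trunc p a' (int (nat m)) * padic_trunc p b' (int (nat m))) i"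
    using False assms(8) by (subst trunc_cong[of _ a a'], simp add: assms(6), subst trunc_cong[of _ b b'])
      (auto simp: assms(7))
  also have "\<dots> = padic_mult p a' b' i"
    using poa_seq.digit[OF mult_poa[OF assms(5) c(7,8)] m] unfolding padic_mult_def by simp
  finally show ?thesis .
qed

section \<open>Absolute value\<close>

lemma abs_zero[simp]: "padic_abs p padic_zero = 0"
  unfolding padic_abs_def by simp

lemma abs_eq:
  assumes "y v \<noteq> 0" "zb v y"
  shows "padic_abs p y = real p powi (- v)"
proof -
  have "y \<noteq> padic_zero" using assms(1) unfolding padic_zero_def by auto
  moreover have "(LEAST i. y i \<noteq> 0) = v"
    by (rule Least_equality) (use assms in \<open>auto simp: zb_def not_less[symmetric]\<close>)
  ultimately show ?thesis unfolding padic_abs_def by simp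
qed

lemma val_exists:
  assumes "y \<in> padic_carrier p" "y \<noteq> padic_zero"
  shows "\<exists>v. y v \<noteq> 0 \<and> zb v y"
proof -
  obtain N where N: "zb N y" using carrier_zb[OF assms(1)] by auto
  obtain i where i: "y i \<noteq> 0" using assms(2) unfolding padic_zero_def by auto
  have "i \<ge> N" using N i unfolding zb_def by (meson not_le)
  hence ex: "\<exists>k::nat. y (N + int k) \<noteq> 0" using i by (intro exI[of _ "nat (i - N)"]) auto
  define k where "k = (LEAST k::nat. y (N + int k) \<noteq> 0)"
  have k: "y (N + int k) \<noteq> 0" unfolding k_def by (rule LeastI_ex[OF ex])
  have "zb (N + int k) y"
    unfolding zb_def
  proof (intro allI impI)
    fix j assume j: "j < N + int k"
    show "y j = 0"
    proof (cases "j < N")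
      case True thus ?thesis using N unfolding zb_def by auto
    next
      case False
      hence "nat (j - N) < k" using j by auto
      hence "\<not> y (N + int (nat (j - N))) \<noteq> 0" unfolding k_def by (rule not_less_Least)
      thus ?thesis using False by auto
    qed
  qed
  thus ?thesis using k by blast
qed

lemma abs_nonneg: "padic_abs p y \<ge> 0"
  unfolding padic_abs_def by auto

lemma abs_pos: "y \<in> padic_carrier p \<Longrightarrow> p > 0 \<Longrightarrow> y \<noteq> padic_zero \<Longrightarrow> padic_abs p y > 0"
  using val_exists abs_eq by fastforce

lemma abs_le_iff:
  assumes "y \<in> padic_carrier p" "p > 1"
  shows "padic_abs p y \<le> real p powi (- m) \<longleftrightarrow> zb m y"
proof (cases "y = padic_zero")
  case True thus ?thesis using assms by simp
next
  case False
  then obtain v where v: "y v \<noteq> 0" "zb v y" using val_exists[OF assms(1)] by auto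
  have "padic_abs p y \<le> real p powi (- m) \<longleftrightarrow> - v \<le> - m"
    unfolding abs_eq[OF v] using assms(2) by (intro powi_le_iff) auto
  also have "\<dots> \<longleftrightarrow> zb m y" using v unfolding zb_def by (auto simp: not_less[symmetric])
  finally show ?thesis .
qed

lemma abs_psh:
  assumes "y \<in> padic_carrier p" "p > 0"
  shows "padic_abs p (psh k y) = real p powi (- k) * padic_abs p y"
proof (cases "y = padic_zero")
  case True thus ?thesis by simp
next
  case False
  then obtain v where v: "y v \<noteq> 0" "zb v y" using val_exists[OF assms(1)] by auto
  have v': "psh k y (v + k) \<noteq> 0" "zb (v + k) (psh k y)" using v zb_psh unfolding psh_def by auto
  have "real p powi (- k + - v) = real p powi (- k) * real p powi (- v)"
    by (rule power_int_add) (use assms(2) in simp)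
  moreover have "- (v + k) = - k + - v" by simp
  moreover have "- v - k = - k + - v" by simp
  ultimately show ?thesis unfolding abs_eq[OF v] abs_eq[OF v'] by (simp only:)
qed

lemma abs_values:
  assumes "y \<in> padic_carrier p" "p > 0"
  shows "padic_abs p y = 0 \<or> (\<exists>m. padic_abs p y = real p powi m)"
  using val_exists[OF assms(1)] abs_eq by (cases "y = padic_zero") auto

lemma abs_eq_0_iff:
  assumes "y \<in> padic_carrier p" "p > 0"
  shows "padic_abs p y = 0 \<longleftrightarrow> y = padic_zero"
  using abs_pos[OF assms] by (metis abs_zero less_irrefl)

lemma char_zero[simp]: "padic_char p padic_zero = 1"
  unfolding padic_char_def padic_frac_def by simp

lemma norm_char[simp]: "norm (padic_char p a) = 1"
  unfolding padic_char_def by simp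

lemma char_add:
  assumes "a \<in> padic_carrier p" "b \<in> padic_carrier p" "p > 0"
  shows "padic_char p (padic_add p a b) = padic_char p a * padic_char p b"
proof -
  have "inZ p 0 (padic_trunc p (padic_add p a b) 0 - (padic_trunc p a 0 + padic_trunc p b 0))"
    by (rule add_trunc[OF assms]) auto
  then obtain z where z: "padic_frac p (padic_add p a b) = padic_frac p a + padic_frac p b + of_int z"
    unfolding inZ_def padic_frac_def by (auto simp: algebra_simps)
  have "padic_char p (padic_add p a b) = cis (2 * pi * real_of_rat (padic_frac p a)) *
        cis (2 * pi * real_of_rat (padic_frac p b)) * cis (2 * pi * of_int z)"
    unfolding padic_char_def z by (simp add: cis_mult of_rat_add algebra_simps)
  thus ?thesis unfolding padic_char_def by simp
qed

lemma pow_Suc: "padic_pow p x (Suc k) = padic_mult p x (padic_pow p x k)"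
  unfolding padic_pow_def by simp

lemma pow_0: "padic_pow p x 0 = padic_one"
  unfolding padic_pow_def by simp

lemma pow_carrier: "x \<in> padic_carrier p \<Longrightarrow> p > 1 \<Longrightarrow> padic_pow p x k \<in> padic_carrier p"
  by (induction k) (auto simp: pow_0 pow_Suc one_carrier mult_carrier)

lemma pow_zp: "zp p x \<Longrightarrow> p > 1 \<Longrightarrow> zp p (padic_pow p x k)"
  by (induction k) (auto simp: pow_0 pow_Suc zp_one zp_mult)

lemma pow_cong:
  assumes "zp p x" "zp p x'" "p > 1" "\<And>i. i < m \<Longrightarrow> x i = x' i" "i < m"
  shows "padic_pow p x k i = padic_pow p x' k i"
  using assms(5)
proof (induction k arbitrary: i)
  case (Suc k)
  show ?case unfolding pow_Suc
    by (rule zp_mult_cong[OF assms(1) pow_zp[OF assms(1,3)] assms(2) pow_zp[OF assms(2,3)] _ assms(4) Suc.IH Suc.prems])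
      (use assms in auto)
qed (simp add: pow_0)

lemma pow_psh:
  assumes "x \<in> padic_carrier p" "p > 1"
  shows "padic_pow p (psh j x) k = psh (j * int k) (padic_pow p x k)"
proof (induction k)
  case 0 thus ?case by (simp add: pow_0)
next
  case (Suc k)
  have "padic_pow p (psh j x) (Suc k) = padic_mult p (psh j x) (psh (j * int k) (padic_pow p x k))"
    unfolding pow_Suc Suc ..
  also have "\<dots> = psh (j + j * int k) (padic_mult p x (padic_pow p x k))"
    by (rule psh_mult[OF assms(1) pow_carrier[OF assms] ]) (use assms in simp)
  finally show ?case by (simp add: pow_Suc algebra_simps)
qed

definition mfold :: "nat \<Rightarrow> (nat \<Rightarrow> nat) \<Rightarrow> padicvec \<Rightarrow> nat list \<Rightarrow> padic" where
  "mfold p \<alpha> \<xi> js = foldr (\<lambda>j acc. padic_mult p (padic_pow p (\<xi> j) (\<alpha> j)) acc) js padic_one"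

lemma monomial_eval_mfold: "monomial_eval p n \<alpha> \<xi> = mfold p \<alpha> \<xi> [0..<n]"
  unfolding monomial_eval_def mfold_def ..

lemma mfold_Cons: "mfold p \<alpha> \<xi> (j # js) = padic_mult p (padic_pow p (\<xi> j) (\<alpha> j)) (mfold p \<alpha> \<xi> js)"
  unfolding mfold_def by simp

lemma mfold_Nil: "mfold p \<alpha> \<xi> [] = padic_one"
  unfolding mfold_def by simp

lemma mfold_carrier:
  "(\<And>j. j \<in> set js \<Longrightarrow> \<xi> j \<in> padic_carrier p) \<Longrightarrow> p > 1 \<Longrightarrow> mfold p \<alpha> \<xi> js \<in> padic_carrier p"
  by (induction js) (auto simp: mfold_Cons mfold_Nil one_carrier mult_carrier pow_carrier)

lemma mfold_zp:
  "(\<And>j. j \<in> set js \<Longrightarrow> zp p (\<xi> j)) \<Longrightarrow> p > 1 \<Longrightarrow> zp p (mfold p \<alpha> \<xi> js)"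
  by (induction js) (auto simp: mfold_Cons mfold_Nil zp_one zp_mult pow_zp)

lemma mfold_cong:
  assumes "\<And>j. j \<in> set js \<Longrightarrow> zp p (\<xi> j)" "\<And>j. j \<in> set js \<Longrightarrow> zp p (\<xi>' j)" "p > 1"
    "\<And>j i. j \<in> set js \<Longrightarrow> i < m \<Longrightarrow> \<xi> j i = \<xi>' j i" "i < m"
  shows "mfold p \<alpha> \<xi> js i = mfold p \<alpha> \<xi>' js i"
  using assms
proof (induction js arbitrary: i)
  case Nil thus ?case by (simp add: mfold_Nil)
next
  case (Cons j js)
  have z: "zp p (padic_pow p (\<xi> j) (\<alpha> j))" "zp p (padic_pow p (\<xi>' j) (\<alpha> j))"
    "zp p (mfold p \<alpha> \<xi> js)" "zp p (mfold p \<alpha> \<xi>' js)"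
    using Cons.prems by (auto intro!: pow_zp mfold_zp)
  have c1: "padic_pow p (\<xi> j) (\<alpha> j) i = padic_pow p (\<xi>' j) (\<alpha> j) i" if "i < m" for i
    by (rule pow_cong[OF _ _ _ _ \<open>i < m\<close>]) (use Cons.prems in auto)
  have c2: "mfold p \<alpha> \<xi> js i = mfold p \<alpha> \<xi>' js i" if "i < m" for i
    by (rule Cons.IH) (use Cons.prems \<open>i < m\<close> in auto)
  show ?case unfolding mfold_Cons
    by (rule zp_mult_cong[OF z(1,3,2,4) _ c1 c2 Cons.prems(5)]) (use Cons.prems in auto)
qed

lemma mfold_psh:
  assumes "\<And>j. j \<in> set js \<Longrightarrow> \<xi> j \<in> padic_carrier p" "p > 1"
  shows "mfold p \<alpha> (\<lambda>j. psh k (\<xi> j)) js = psh (k * int (sum_list (map \<alpha> js))) (mfold p \<alpha> \<xi> js)"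
  using assms(1)
proof (induction js)
  case Nil thus ?case by (simp add: mfold_Nil)
next
  case (Cons j js)
  have "mfold p \<alpha> (\<lambda>j. psh k (\<xi> j)) (j # js)
      = padic_mult p (psh (k * int (\<alpha> j)) (padic_pow p (\<xi> j) (\<alpha> j)))
                     (psh (k * int (sum_list (map \<alpha> js))) (mfold p \<alpha> \<xi> js))"
  proof -
    have "padic_pow p (psh k (\<xi> j)) (\<alpha> j) = psh (k * int (\<alpha> j)) (padic_pow p (\<xi> j) (\<alpha> j))"
      by (rule pow_psh) (use Cons.prems assms(2) in auto)
    thus ?thesis unfolding mfold_Cons using Cons by simp
  qed
  also have "\<dots> = psh (k * int (\<alpha> j) + k * int (sum_list (map \<alpha> js)))
                      (padic_mult p (padic_pow p (\<xi> j) (\<alpha> j)) (mfold p \<alpha> \<xi> js))"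
    by (rule psh_mult[OF pow_carrier mfold_carrier]) (use Cons.prems assms(2) in auto)
  finally show ?case by (simp add: mfold_Cons algebra_simps)
qed

definition pfold :: "nat \<Rightarrow> nat \<Rightarrow> padicvec \<Rightarrow> padic_poly \<Rightarrow> padic" where
  "pfold p n \<xi> f = foldr (\<lambda>(c, \<alpha>) acc. padic_add p (padic_mult p c (monomial_eval p n \<alpha> \<xi>)) acc) f padic_zero"

lemma poly_eval_pfold: "poly_eval p n f \<xi> = pfold p n \<xi> f"
  unfolding poly_eval_def pfold_def ..

lemma pfold_Cons: "pfold p n \<xi> ((c, \<alpha>) # f) = padic_add p (padic_mult p c (monomial_eval p n \<alpha> \<xi>)) (pfold p n \<xi> f)"
  unfolding pfold_def by simp

lemma pfold_Nil: "pfold p n \<xi> [] = padic_zero"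
  unfolding pfold_def by simp

lemma poly_carrier:
  assumes "\<And>c \<alpha>. (c, \<alpha>) \<in> set f \<Longrightarrow> c \<in> padic_carrier p" "\<And>j. j < n \<Longrightarrow> \<xi> j \<in> padic_carrier p" "p > 1"
  shows "poly_eval p n f \<xi> \<in> padic_carrier p"
  unfolding poly_eval_pfold using assms(1)
proof (induction f)
  case (Cons t f)
  obtain c \<alpha> where t: "t = (c, \<alpha>)" by force
  have m: "monomial_eval p n \<alpha> \<xi> \<in> padic_carrier p"
    unfolding monomial_eval_mfold by (rule mfold_carrier) (use assms in auto)
  show ?case unfolding t pfold_Cons
    by (rule add_carrier[OF mult_carrier[OF _ m]]) (use Cons assms(3) t in auto)
qed (use assms in \<open>simp add: pfold_Nil\<close>)

lemma poly_zp:
  assumes "\<And>c \<alpha>. (c, \<alpha>) \<in> set f \<Longrightarrow> zp p c" "\<And>j. j < n \<Longrightarrow> zp p (\<xi> j)" "p > 1"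
  shows "zp p (poly_eval p n f \<xi>)"
  unfolding poly_eval_pfold using assms(1)
proof (induction f)
  case (Cons t f)
  obtain c \<alpha> where t: "t = (c, \<alpha>)" by force
  have m: "zp p (monomial_eval p n \<alpha> \<xi>)"
    unfolding monomial_eval_mfold by (rule mfold_zp) (use assms in auto)
  show ?case unfolding t pfold_Cons
    by (rule zp_add[OF zp_mult[OF _ m]]) (use Cons assms(3) t in auto)
qed (use assms in \<open>simp add: pfold_Nil zp_zero\<close>)

lemma poly_cong:
  assumes "\<And>c \<alpha>. (c, \<alpha>) \<in> set f \<Longrightarrow> zp p c" "\<And>j. j < n \<Longrightarrow> zp p (\<xi> j)"
    "\<And>j. j < n \<Longrightarrow> zp p (\<xi>' j)" "p > 1"
    "\<And>j i. j < n \<Longrightarrow> i < m \<Longrightarrow> \<xi> j i = \<xi>' j i" "i < m"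
  shows "poly_eval p n f \<xi> i = poly_eval p n f \<xi>' i"
  unfolding poly_eval_pfold using assms(1,6)
proof (induction f arbitrary: i)
  case (Cons t f)
  obtain c \<alpha> where t: "t = (c, \<alpha>)" by force
  have m: "zp p (monomial_eval p n \<alpha> \<xi>)" "zp p (monomial_eval p n \<alpha> \<xi>')"
    unfolding monomial_eval_mfold by (rule mfold_zp, use assms in auto)+
  have mc: "monomial_eval p n \<alpha> \<xi> i = monomial_eval p n \<alpha> \<xi>' i" if "i < m" for i
    unfolding monomial_eval_mfold by (rule mfold_cong) (use assms that in auto)
  have c: "zp p c" using Cons.prems t by auto
  have pz: "zp p (pfold p n \<xi> f)" "zp p (pfold p n \<xi>' f)"
    using poly_zp[of f p n \<xi>] poly_zp[of f p n \<xi>'] Cons.prems assms unfolding poly_eval_pfold by auto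
  show ?case unfolding t pfold_Cons
  proof (rule zp_add_cong[OF zp_mult[OF c m(1)] pz(1) zp_mult[OF c m(2)] pz(2) _ _ _ Cons.prems(2)])
    fix i assume "i < m"
    show "padic_mult p c (monomial_eval p n \<alpha> \<xi>) i = padic_mult p c (monomial_eval p n \<alpha> \<xi>') i"
      by (rule zp_mult_cong[OF c m(1) c m(2) _ _ mc \<open>i < m\<close>]) (use assms in auto)
  next
    fix i assume "i < m"
    show "pfold p n \<xi> f i = pfold p n \<xi>' f i" by (rule Cons.IH) (use Cons.prems \<open>i < m\<close> in auto)
  qed (use assms in auto)
qed (simp add: pfold_Nil)

lemma poly_psh:
  assumes hom: "padic_homogeneous p n d f" and xi: "\<And>j. j < n \<Longrightarrow> \<xi> j \<in> padic_carrier p" and p: "p > 1"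
  shows "poly_eval p n f (\<lambda>j. psh k (\<xi> j)) = psh (k * int d) (poly_eval p n f \<xi>)"
  unfolding poly_eval_pfold using hom
proof (induction f)
  case Nil thus ?case by (simp add: pfold_Nil)
next
  case (Cons t f)
  obtain c \<alpha> where t: "t = (c, \<alpha>)" by force
  have c: "c \<in> padic_carrier p" "(\<Sum>j<n. \<alpha> j) = d" using Cons.prems t unfolding padic_homogeneous_def by auto
  have hf: "padic_homogeneous p n d f" using Cons.prems unfolding padic_homogeneous_def by auto
  have sl: "sum_list (map \<alpha> [0..<n]) = d"
    using c(2) sum_set_upt_conv_sum_list_nat[of \<alpha> 0 n] by (simp add: atLeast0LessThan)
  have mc: "monomial_eval p n \<alpha> \<xi> \<in> padic_carrier p"
    unfolding monomial_eval_mfold by (rule mfold_carrier) (use xi p in auto)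
  have me: "monomial_eval p n \<alpha> (\<lambda>j. psh k (\<xi> j)) = psh (k * int d) (monomial_eval p n \<alpha> \<xi>)"
    unfolding monomial_eval_mfold using mfold_psh[where js="[0..<n]" and \<xi>=\<xi> and k=k and \<alpha>=\<alpha> and p=p] xi p sl by auto
  have pc: "pfold p n \<xi> f \<in> padic_carrier p"
    using poly_carrier[of f p n \<xi>] hf xi p unfolding poly_eval_pfold padic_homogeneous_def by auto
  have "padic_mult p c (psh (k * int d) (monomial_eval p n \<alpha> \<xi>)) = psh (k * int d) (padic_mult p c (monomial_eval p n \<alpha> \<xi>))"
    using psh_mult[OF c(1) mc, of 0 "k * int d"] p by simp
  thus ?case unfolding t pfold_Cons me Cons.IH[OF hf]
    using psh_add[OF mult_carrier[OF c(1) mc] pc] p by simp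
qed

lemma qpn_carrier: "x \<in> qpn p n \<Longrightarrow> j < n \<Longrightarrow> x j \<in> padic_carrier p"
  unfolding qpn_def by auto

lemma qpn_out: "x \<in> qpn p n \<Longrightarrow> \<not> j < n \<Longrightarrow> x j = padic_zero"
  unfolding qpn_def by auto

lemma qpnI: "(\<And>j. j < n \<Longrightarrow> x j \<in> padic_carrier p) \<Longrightarrow> (\<And>j. \<not> j < n \<Longrightarrow> x j = padic_zero) \<Longrightarrow> x \<in> qpn p n"
  unfolding qpn_def by auto

lemma vzero_qpn: "p > 0 \<Longrightarrow> padic_vzero \<in> qpn p n"
  unfolding qpn_def padic_vzero_def by auto

lemma vadd_qpn: "a \<in> qpn p n \<Longrightarrow> b \<in> qpn p n \<Longrightarrow> p > 0 \<Longrightarrow> vadd p n a b \<in> qpn p n"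
  unfolding vadd_def by (rule qpnI) (auto simp: qpn_carrier add_carrier)

definition vneg :: "nat \<Rightarrow> nat \<Rightarrow> padicvec \<Rightarrow> padicvec" where
  "vneg p n a = (\<lambda>j. if j < n then padic_neg p (a j) else padic_zero)"

lemma vneg_qpn: "a \<in> qpn p n \<Longrightarrow> p > 0 \<Longrightarrow> vneg p n a \<in> qpn p n"
  unfolding vneg_def by (rule qpnI) (auto simp: qpn_carrier neg_carrier)

lemma vadd_vzero_left: "a \<in> qpn p n \<Longrightarrow> p > 0 \<Longrightarrow> vadd p n padic_vzero a = a"
  unfolding vadd_def padic_vzero_def by (auto simp: fun_eq_iff add_zero_left qpn_carrier qpn_out)

lemma vadd_comm: "vadd p n a b = vadd p n b a"
proof (rule ext)
  fix j show "vadd p n a b j = vadd p n b a j" unfolding vadd_def using add_comm[of p "a j" "b j"] by simp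
qed

lemma vadd_assoc: "a \<in> qpn p n \<Longrightarrow> b \<in> qpn p n \<Longrightarrow> c \<in> qpn p n \<Longrightarrow> p > 0 \<Longrightarrow>
    vadd p n (vadd p n a b) c = vadd p n a (vadd p n b c)"
  unfolding vadd_def by (auto simp: fun_eq_iff add_assoc qpn_carrier)

lemma vneg_cancel: "a \<in> qpn p n \<Longrightarrow> z \<in> qpn p n \<Longrightarrow> p > 0 \<Longrightarrow> vadd p n (vneg p n a) (vadd p n a z) = z"
proof -
  assume a: "a \<in> qpn p n" and z: "z \<in> qpn p n" and p: "p > 0"
  have "vadd p n (vneg p n a) (vadd p n a z) = vadd p n (vadd p n (vneg p n a) a) z"
    using vadd_assoc[OF vneg_qpn[OF a p] a z p] by simp
  also have "vadd p n (vneg p n a) a = padic_vzero"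
    unfolding vadd_def vneg_def padic_vzero_def
    by (auto simp: fun_eq_iff add_comm[of p "padic_neg p _"] add_neg qpn_carrier[OF a] p)
  finally show ?thesis using vadd_vzero_left[OF z p] by simp
qed

lemma vneg_cancel': "a \<in> qpn p n \<Longrightarrow> z \<in> qpn p n \<Longrightarrow> p > 0 \<Longrightarrow> vadd p n a (vadd p n (vneg p n a) z) = z"
proof -
  assume a: "a \<in> qpn p n" and z: "z \<in> qpn p n" and p: "p > 0"
  have "vadd p n a (vadd p n (vneg p n a) z) = vadd p n (vadd p n a (vneg p n a)) z"
    using vadd_assoc[OF a vneg_qpn[OF a p] z p] by simp
  also have "vadd p n a (vneg p n a) = padic_vzero"
    unfolding vadd_def vneg_def padic_vzero_def
    by (auto simp: fun_eq_iff add_neg qpn_carrier[OF a] p)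
  finally show ?thesis using vadd_vzero_left[OF z p] by simp
qed

definition vsh :: "int \<Rightarrow> padicvec \<Rightarrow> padicvec" where
  "vsh k x = (\<lambda>j. psh k (x j))"

lemma vsh_qpn: "x \<in> qpn p n \<Longrightarrow> vsh k x \<in> qpn p n"
  unfolding vsh_def by (rule qpnI) (auto simp: qpn_carrier qpn_out psh_carrier)

lemma vsh_vsh[simp]: "vsh j (vsh k x) = vsh (j + k) x" unfolding vsh_def by simp
lemma vsh_0[simp]: "vsh 0 x = x" unfolding vsh_def by simp

lemma vsh_vadd: "a \<in> qpn p n \<Longrightarrow> b \<in> qpn p n \<Longrightarrow> p > 0 \<Longrightarrow> vadd p n (vsh k a) (vsh k b) = vsh k (vadd p n a b)"
  unfolding vadd_def vsh_def by (auto simp: fun_eq_iff psh_add qpn_carrier)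

lemma norm_nonneg: "n \<ge> 1 \<Longrightarrow> padic_norm p n x \<ge> 0"
proof -
  assume False: "n \<ge> 1"
  hence "padic_abs p (x 0) \<le> padic_norm p n x" unfolding padic_norm_def by (intro Max_ge) auto
  thus ?thesis using abs_nonneg[of p "x 0"] by linarith
qed

lemma norm_le_iff:
  assumes "x \<in> qpn p n" "n \<ge> 1" "p > 1"
  shows "padic_norm p n x \<le> real p powi (- m) \<longleftrightarrow> (\<forall>j<n. zb m (x j))"
proof -
  have "padic_norm p n x \<le> real p powi (- m) \<longleftrightarrow> (\<forall>j<n. padic_abs p (x j) \<le> real p powi (- m))"
  proof -
    have "0 \<in> {..<n}" using assms by simp
    hence "{..<n} \<noteq> {}" by blast
    thus ?thesis unfolding padic_norm_def by (subst Max_le_iff) auto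
  qed
  also have "\<dots> \<longleftrightarrow> (\<forall>j<n. zb m (x j))" using abs_le_iff qpn_carrier assms by blast
  finally show ?thesis .
qed

lemma norm_attained:
  assumes "n \<ge> 1"
  shows "\<exists>j<n. padic_norm p n x = padic_abs p (x j)"
proof -
  have "padic_norm p n x \<in> (\<lambda>j. padic_abs p (x j)) ` {..<n}"
  proof -
    have "0 \<in> {..<n}" using assms by simp
    thus ?thesis unfolding padic_norm_def by (intro Max_in) auto
  qed
  thus ?thesis by auto
qed

lemma norm_ge: "j < n \<Longrightarrow> padic_abs p (x j) \<le> padic_norm p n x"
  unfolding padic_norm_def by (intro Max_ge) auto

lemma norm_values:
  assumes "x \<in> qpn p n" "n \<ge> 1" "p > 0"
  shows "padic_norm p n x = 0 \<or> (\<exists>m. padic_norm p n x = real p powi m)"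
  using norm_attained[OF assms(2), of p x] abs_values[OF qpn_carrier[OF assms(1)] assms(3)] by metis

lemma norm_zero_iff:
  assumes "x \<in> qpn p n" "n \<ge> 1" "p > 0"
  shows "padic_norm p n x = 0 \<longleftrightarrow> x = padic_vzero"
proof
  assume h: "padic_norm p n x = 0"
  show "x = padic_vzero"
  proof
    fix j show "x j = padic_vzero j"
    proof (cases "j < n")
      case True
      hence "padic_abs p (x j) = 0" using norm_ge[OF True, of p x] h abs_nonneg[of p "x j"] by linarith
      thus ?thesis using abs_eq_0_iff[OF qpn_carrier[OF assms(1) True] assms(3)] by (simp add: padic_vzero_def)
    qed (use assms qpn_out in \<open>auto simp: padic_vzero_def\<close>)
  qed
next
  assume "x = padic_vzero"
  moreover have "0 \<in> {..<n}" using assms(2) by simp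
  hence "{..<n} \<noteq> {}" by blast
  ultimately show "padic_norm p n x = 0" unfolding padic_norm_def padic_vzero_def
    by (simp add: image_constant_conv)
qed

lemma norm_decomp:
  assumes "x \<in> qpn p n" "n \<ge> 1" "p > 1" "x \<noteq> padic_vzero"
  shows "\<exists>w. padic_norm p n x = real p powi (- w) \<and> (\<forall>j<n. zb w (x j)) \<and> (\<exists>j<n. x j w \<noteq> 0)"
proof -
  obtain m where m: "padic_norm p n x = real p powi m"
    using norm_values[OF assms(1,2)] norm_zero_iff[OF assms(1,2)] assms by auto
  have 1: "\<forall>j<n. zb (- m) (x j)" using norm_le_iff[OF assms(1-3), of "- m"] m by simp
  have "\<not> padic_norm p n x \<le> real p powi (- (- m + 1))"
    unfolding m using assms(3) by (subst powi_le_iff) auto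
  then obtain j where j: "j < n" "\<not> zb (- m + 1) (x j)" using norm_le_iff[OF assms(1-3), of "- m + 1"] by auto
  then obtain i where i: "i < - m + 1" "x j i \<noteq> 0" unfolding zb_def by auto
  have "i = - m" using 1 i j unfolding zb_def by (meson linorder_not_less zless_add1_eq)
  thus ?thesis using 1 i j m by (intro exI[of _ "- m"]) auto
qed

definition dfold :: "nat \<Rightarrow> padicvec \<Rightarrow> padicvec \<Rightarrow> nat list \<Rightarrow> padic" where
  "dfold p x \<xi> js = foldr (\<lambda>j acc. padic_add p (padic_mult p (x j) (\<xi> j)) acc) js padic_zero"

lemma dot_dfold: "padic_dot p n x \<xi> = dfold p x \<xi> [0..<n]"
  unfolding padic_dot_def dfold_def ..

lemma dfold_Cons: "dfold p x \<xi> (j # js) = padic_add p (padic_mult p (x j) (\<xi> j)) (dfold p x \<xi> js)"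
  unfolding dfold_def by simp

lemma dfold_Nil: "dfold p x \<xi> [] = padic_zero"
  unfolding dfold_def by simp

lemma dfold_carrier: "(\<And>j. j \<in> set js \<Longrightarrow> x j \<in> padic_carrier p \<and> \<xi> j \<in> padic_carrier p) \<Longrightarrow> p > 0 \<Longrightarrow>
   dfold p x \<xi> js \<in> padic_carrier p"
  by (induction js) (auto simp: dfold_Cons dfold_Nil add_carrier mult_carrier)

lemma char_dfold_add:
  assumes "\<And>j. j \<in> set js \<Longrightarrow> x j \<in> padic_carrier p \<and> \<xi> j \<in> padic_carrier p \<and> \<eta> j \<in> padic_carrier p" "p > 0"
  shows "padic_char p (dfold p x (\<lambda>j. padic_add p (\<eta> j) (\<xi> j)) js) =
         padic_char p (dfold p x \<eta> js) * padic_char p (dfold p x \<xi> js)"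
  using assms(1)
proof (induction js)
  case (Cons j js)
  have c: "x j \<in> padic_carrier p" "\<xi> j \<in> padic_carrier p" "\<eta> j \<in> padic_carrier p" using Cons.prems by auto
  have d: "dfold p x (\<lambda>j. padic_add p (\<eta> j) (\<xi> j)) js \<in> padic_carrier p"
    "dfold p x \<eta> js \<in> padic_carrier p" "dfold p x \<xi> js \<in> padic_carrier p"
    by (rule dfold_carrier, use Cons.prems add_carrier assms(2) in auto)+
  have "padic_mult p (x j) (padic_add p (\<eta> j) (\<xi> j)) = padic_add p (padic_mult p (x j) (\<eta> j)) (padic_mult p (x j) (\<xi> j))"
    by (rule distrib_left[OF c(1,3,2) assms(2)])
  thus ?case unfolding dfold_Cons
    using char_add[OF mult_carrier[OF c(1) add_carrier[OF c(3,2) assms(2)] assms(2)] d(1) assms(2)]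
      char_add[OF mult_carrier[OF c(1,3) assms(2)] d(2) assms(2)]
      char_add[OF mult_carrier[OF c(1,2) assms(2)] d(3) assms(2)]
      char_add[OF mult_carrier[OF c(1,3) assms(2)] mult_carrier[OF c(1,2) assms(2)] assms(2)]
      Cons.IH Cons.prems by (simp add: mult_ac)
qed (simp add: dfold_Nil)

lemma char_dot_vadd:
  assumes "x \<in> qpn p n" "\<xi> \<in> qpn p n" "\<eta> \<in> qpn p n" "p > 0"
  shows "padic_char p (padic_dot p n x (vadd p n \<eta> \<xi>)) = padic_char p (padic_dot p n x \<eta>) * padic_char p (padic_dot p n x \<xi>)"
proof -
  have "dfold p x (vadd p n \<eta> \<xi>) [0..<n] = dfold p x (\<lambda>j. padic_add p (\<eta> j) (\<xi> j)) [0..<n]"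
    unfolding dfold_def vadd_def by (intro foldr_cong) auto
  thus ?thesis unfolding dot_dfold using char_dfold_add[of "[0..<n]" x p \<xi> \<eta>] assms qpn_carrier by auto
qed

lemma char_dfold_single:
  assumes "\<And>j. j \<in> set js \<Longrightarrow> x j \<in> padic_carrier p" "u \<in> padic_carrier p" "p > 0" "distinct js"
  shows "padic_char p (dfold p x (\<lambda>j. if j = j0 then u else padic_zero) js) =
    (if j0 \<in> set js then padic_char p (padic_mult p (x j0) u) else 1)"
  using assms(1,4)
proof (induction js)
  case (Cons j js)
  have d: "dfold p x (\<lambda>j. if j = j0 then u else padic_zero) js \<in> padic_carrier p"
    by (rule dfold_carrier) (use Cons.prems assms(2,3) in auto)
  have m: "padic_mult p (x j) (if j = j0 then u else padic_zero) \<in> padic_carrier p"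
    using mult_carrier Cons.prems assms(2,3) by auto
  show ?case unfolding dfold_Cons char_add[OF m d assms(3)] using Cons by auto
qed (simp add: dfold_Nil)

lemma char_dot_single:
  assumes "x \<in> qpn p n" "u \<in> padic_carrier p" "p > 0" "j0 < n"
  shows "padic_char p (padic_dot p n x (\<lambda>j. if j = j0 then u else padic_zero)) = padic_char p (padic_mult p (x j0) u)"
  unfolding dot_dfold using char_dfold_single[of "[0..<n]" x p u j0] assms qpn_carrier by auto

section \<open>Prefix compactness\<close>

definition pre :: "nat \<Rightarrow> nat \<Rightarrow> padicvec \<Rightarrow> nat \<Rightarrow> int \<Rightarrow> nat" where
  "pre n m \<xi> = (\<lambda>j i. if j < n \<and> 0 \<le> i \<and> i < int m then \<xi> j i else 0)"

lemma pre_pre: "m \<le> m' \<Longrightarrow> pre n m (pre n m' \<xi>) = pre n m \<xi>"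
  unfolding pre_def by (auto simp: fun_eq_iff)

lemma finite_pre_range:
  assumes "\<And>L. \<forall>j i. X L j i < p"
  shows "finite (range (\<lambda>L. pre n m (X L)))"
proof -
  let ?A = "{w :: nat \<Rightarrow> int \<Rightarrow> nat. (\<forall>j i. w j i < p) \<and> (\<forall>j i. \<not> (j < n \<and> 0 \<le> i \<and> i < int m) \<longrightarrow> w j i = 0)}"
  let ?F = "\<lambda>w. restrict (\<lambda>(j, i). w j (int i)) ({..<n} \<times> {..<m})"
  have "inj_on ?F ?A"
  proof (rule inj_onI)
    fix w w' assume w: "w \<in> ?A" "w' \<in> ?A" "?F w = ?F w'"
    show "w = w'"
    proof (intro ext)
      fix j i
      show "w j i = w' j i"
      proof (cases "j < n \<and> 0 \<le> i \<and> i < int m")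
        case True
        hence "(j, nat i) \<in> {..<n} \<times> {..<m}" by auto
        hence "?F w (j, nat i) = ?F w' (j, nat i)" using w(3) by simp
        moreover have "nat i < m" "int (nat i) = i" using True by auto
        ultimately show ?thesis using True by simp
      qed (use w in auto)
    qed
  qed
  moreover have "?F ` ?A \<subseteq> PiE ({..<n} \<times> {..<m}) (\<lambda>_. {..<p})"
    unfolding image_subset_iff restrict_PiE_iff by auto
  moreover have "finite (PiE ({..<n} \<times> {..<m}) (\<lambda>_. {..<p}))" by (intro finite_PiE) auto
  ultimately have "finite ?A" by (rule inj_on_finite)
  moreover have "X undefined 0 0 < p" using assms by blast
  hence "p > 0" by simp
  hence "range (\<lambda>L. pre n m (X L)) \<subseteq> ?A" using assms unfolding pre_def by auto
  ultimately show ?thesis using finite_subset by blast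
qed

lemma koenig_step:
  assumes "\<And>L. \<forall>j i. X L j i < p" "infinite {L. pre n m (X L) = w}"
  shows "\<exists>w'. infinite {L. pre n (Suc m) (X L) = w'} \<and> pre n m w' = w"
proof (rule ccontr)
  assume "\<not> ?thesis"
  hence fin: "\<And>w'. pre n m w' = w \<Longrightarrow> finite {L. pre n (Suc m) (X L) = w'}" by auto
  let ?W = "range (\<lambda>L. pre n (Suc m) (X L)) \<inter> {w'. pre n m w' = w}"
  have "{L. pre n m (X L) = w} \<subseteq> (\<Union>w'\<in>?W. {L. pre n (Suc m) (X L) = w'})"
    using pre_pre[of m "Suc m" n] by auto
  moreover have "finite (\<Union>w'\<in>?W. {L. pre n (Suc m) (X L) = w'})"
    using finite_pre_range[where X=X, OF assms(1), of n "Suc m"] fin by (intro finite_UN_I) auto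
  ultimately show False using assms(2) finite_subset by blast
qed

lemma koenig:
  assumes "\<And>L. \<forall>j i. X L j i < p"
  shows "\<exists>\<xi>. (\<forall>j i. \<xi> j i < p) \<and> (\<forall>j i. \<not> (j < n \<and> 0 \<le> i) \<longrightarrow> \<xi> j i = 0) \<and>
              (\<forall>m. \<exists>L\<ge>m. pre n m (X L) = pre n m \<xi>)"
proof -
  define G where "G = (\<lambda>m w. infinite {L. pre n m (X L) = w})"
  define W where "W = rec_nat (\<lambda>_ _. 0::nat) (\<lambda>m w. SOME w'. G (Suc m) w' \<and> pre n m w' = w)"
  have W0: "W 0 = (\<lambda>_ _. 0)" unfolding W_def by simp
  have WS: "W (Suc m) = (SOME w'. G (Suc m) w' \<and> pre n m w' = W m)" for m unfolding W_def by simp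
  have GW: "G m (W m) \<and> (\<forall>m'\<le>m. pre n m' (W m) = W m')" for m
  proof (induction m)
    case 0
    have "pre n 0 (X L) = (\<lambda>_ _. 0)" for L by (simp add: pre_def fun_eq_iff)
    thus ?case unfolding G_def W0 by (auto simp: pre_def fun_eq_iff W0)
  next
    case (Suc m)
    have ex: "\<exists>w'. G (Suc m) w' \<and> pre n m w' = W m"
      using koenig_step[where X=X, OF assms] Suc.IH unfolding G_def by blast
    have s: "G (Suc m) (W (Suc m)) \<and> pre n m (W (Suc m)) = W m"
      unfolding WS by (rule someI_ex[OF ex])
    have "pre n m' (W (Suc m)) = W m'" if "m' \<le> Suc m" for m'
    proof (cases "m' = Suc m")
      case True
      from s have "\<exists>L. pre n (Suc m) (X L) = W (Suc m)" unfolding G_def by (metis (mono_tags) empty_Collect_eq finite.emptyI)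
      then obtain L where "pre n (Suc m) (X L) = W (Suc m)" by auto
      thus ?thesis using True pre_pre[of "Suc m" "Suc m" n "X L"] by simp
    next
      case False
      hence "m' \<le> m" using that by auto
      hence "pre n m' (W (Suc m)) = pre n m' (pre n m (W (Suc m)))" using pre_pre by metis
      thus ?thesis using s Suc.IH \<open>m' \<le> m\<close> by simp
    qed
    thus ?case using s by auto
  qed
  have Wx: "\<exists>L. pre n m (X L) = W m" for m
    using GW[of m] unfolding G_def by (metis (mono_tags) empty_Collect_eq finite.emptyI)
  define \<xi> where "\<xi> = (\<lambda>j i. if j < n \<and> 0 \<le> i then W (Suc (nat i)) j i else 0)"
  have pw: "pre n m \<xi> = W m" for m
  proof (intro ext)
    fix j i
    obtain L where L: "pre n m (X L) = W m" using Wx by auto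
    show "pre n m \<xi> j i = W m j i"
    proof (cases "j < n \<and> 0 \<le> i \<and> i < int m")
      case True
      hence "Suc (nat i) \<le> m" by auto
      hence "pre n (Suc (nat i)) (W m) = W (Suc (nat i))" using GW[of m] by auto
      hence "W (Suc (nat i)) j i = pre n (Suc (nat i)) (W m) j i" by simp
      also have "\<dots> = W m j i" using True unfolding pre_def by auto
      finally show ?thesis using True unfolding pre_def \<xi>_def by simp
    next
      case False
      have "W m j i = pre n m (X L) j i" using L by simp
      thus ?thesis using False unfolding pre_def by auto
    qed
  qed
  have lt: "\<xi> j i < p" for j i
  proof -
    obtain L where "pre n (Suc (nat i)) (X L) = W (Suc (nat i))" using Wx by auto
    hence "W (Suc (nat i)) j i = pre n (Suc (nat i)) (X L) j i" by simp
    moreover have "X L 0 0 < p" using assms by blast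
    hence "p > 0" by simp
    ultimately show ?thesis using assms[of L] unfolding \<xi>_def pre_def by (cases "j < n \<and> 0 \<le> i") auto
  qed
  show ?thesis
  proof (intro exI[of _ \<xi>] conjI allI impI)
    fix m
    have "infinite {L. pre n m (X L) = W m}" using GW[of m] unfolding G_def by simp
    then obtain L where "L \<ge> m" "pre n m (X L) = W m" unfolding infinite_nat_iff_unbounded_le by auto
    thus "\<exists>L\<ge>m. pre n m (X L) = pre n m \<xi>" using pw by auto
  qed (use lt in \<open>auto simp: \<xi>_def\<close>)
qed

section \<open>Elliptic polynomials\<close>

locale ellf =
  fixes p n d :: nat and f :: padic_poly
  assumes p: "p > 1" and n: "n \<ge> 1" and intc: "padic_int_coeffs f" and ell: "padic_elliptic p n d f"
begin

lemma d: "d \<ge> 1" using ell unfolding padic_elliptic_def by auto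

lemma hom: "padic_homogeneous p n d f" using ell unfolding padic_elliptic_def by auto

lemma p0: "p > 0" using p by simp

lemma coef_zp: "(c, \<alpha>) \<in> set f \<Longrightarrow> zp p c"
  using hom intc unfolding padic_homogeneous_def padic_int_coeffs_def zp_def zb_def by auto

lemma coef_carrier: "(c, \<alpha>) \<in> set f \<Longrightarrow> c \<in> padic_carrier p"
  using coef_zp unfolding zp_def by auto

lemma f_carrier: "\<xi> \<in> qpn p n \<Longrightarrow> poly_eval p n f \<xi> \<in> padic_carrier p"
  by (rule poly_carrier) (use coef_carrier qpn_carrier p in auto)

lemma f_zero_iff: "\<xi> \<in> qpn p n \<Longrightarrow> poly_eval p n f \<xi> = padic_zero \<longleftrightarrow> \<xi> = padic_vzero"
  using ell unfolding padic_elliptic_def by auto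

lemma f_vsh: "\<xi> \<in> qpn p n \<Longrightarrow> poly_eval p n f (vsh k \<xi>) = psh (k * int d) (poly_eval p n f \<xi>)"
  unfolding vsh_def by (rule poly_psh[OF hom _ p]) (use qpn_carrier in auto)

lemma f_zp: "(\<And>j. j < n \<Longrightarrow> zp p (\<xi> j)) \<Longrightarrow> zp p (poly_eval p n f \<xi>)"
  by (rule poly_zp) (use coef_zp p in auto)

definition sph :: "padicvec set" where
  "sph = {\<xi> \<in> qpn p n. (\<forall>j<n. zp p (\<xi> j)) \<and> (\<exists>j<n. \<xi> j 0 \<noteq> 0)}"

lemma lower_digit: "\<exists>L::nat. \<forall>\<xi>\<in>sph. \<not> zb (int L) (poly_eval p n f \<xi>)"
proof (rule ccontr)
  assume "\<not> ?thesis"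
  hence "\<forall>L. \<exists>\<xi>. \<xi> \<in> sph \<and> zb (int L) (poly_eval p n f \<xi>)" by auto
  hence "\<exists>X. \<forall>L. X L \<in> sph \<and> zb (int L) (poly_eval p n f (X L))" by (rule choice)
  then obtain X where X: "\<And>L. X L \<in> sph" "\<And>L. zb (int L) (poly_eval p n f (X L))" by blast
  have Xq: "\<And>L. X L \<in> qpn p n" using X(1) unfolding sph_def by blast
  have zX: "\<And>L j. j < n \<Longrightarrow> zp p (X L j)" using X(1) unfolding sph_def by blast
  have Xc: "\<And>L. \<forall>j i. X L j i < p"
  proof (intro allI)
    fix L j i
    show "X L j i < p"
    proof (cases "j < n")
      case True thus ?thesis using carrier_less[OF qpn_carrier[OF Xq True]] by blast
    next
      case False thus ?thesis using qpn_out[OF Xq False] p unfolding padic_zero_def by simp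
    qed
  qed
  obtain \<xi> where \<xi>: "\<forall>j i. \<xi> j i < p" "\<forall>j i. \<not> (j < n \<and> 0 \<le> i) \<longrightarrow> \<xi> j i = 0"
    "\<forall>m. \<exists>L\<ge>m. pre n m (X L) = pre n m \<xi>"
    using koenig[where X=X, OF Xc] by blast
  have zpx: "zp p (\<xi> j)" for j
  proof -
    have "\<forall>i<0. \<xi> j i = 0" using \<xi>(2) by simp
    thus ?thesis unfolding zp_def padic_carrier_def zb_def using \<xi>(1) by blast
  qed
  have xq: "\<xi> \<in> qpn p n"
  proof (rule qpnI)
    fix j show "j < n \<Longrightarrow> \<xi> j \<in> padic_carrier p" using zpx unfolding zp_def by blast
    show "\<not> j < n \<Longrightarrow> \<xi> j = padic_zero" using \<xi>(2) unfolding padic_zero_def by auto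
  qed
  have fz: "poly_eval p n f \<xi> i = 0" for i
  proof (cases "i < 0")
    case True
    have "zp p (poly_eval p n f \<xi>)" by (rule f_zp) (rule zpx)
    thus ?thesis using True unfolding zp_def zb_def by blast
  next
    case False
    obtain L where L: "L \<ge> Suc (nat i)" "pre n (Suc (nat i)) (X L) = pre n (Suc (nat i)) \<xi>"
      using \<xi>(3) by blast
    have agree: "\<xi> j i' = X L j i'" if ji: "j < n" "i' < int (Suc (nat i))" for j i'
    proof (cases "i' < 0")
      case True thus ?thesis using zpx[of j] zX[OF ji(1), of L] True unfolding zp_def zb_def by simp
    next
      case False
      have "pre n (Suc (nat i)) (X L) j i' = pre n (Suc (nat i)) \<xi> j i'" using L(2) by simp
      thus ?thesis using False ji unfolding pre_def by simp
    qed
    have "poly_eval p n f \<xi> i = poly_eval p n f (X L) i"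
      by (rule poly_cong[where m = "int (Suc (nat i))", OF _ _ _ p agree]) (use coef_zp zpx zX False in auto)
    also have "\<dots> = 0" using X(2)[of L] L(1) False unfolding zb_def by simp
    finally show ?thesis .
  qed
  hence "poly_eval p n f \<xi> = padic_zero" unfolding padic_zero_def by (intro ext) simp
  hence x0: "\<xi> = padic_vzero" using f_zero_iff[OF xq] by simp
  obtain L where L: "pre n 1 (X L) = pre n 1 \<xi>" using \<xi>(3) by blast
  obtain j where j: "j < n" "X L j 0 \<noteq> 0" using X(1)[of L] unfolding sph_def by blast
  have "pre n 1 (X L) j 0 = pre n 1 \<xi> j 0" using L by simp
  hence "X L j 0 = \<xi> j 0" using j(1) unfolding pre_def by simp
  thus False using j(2) x0 unfolding padic_vzero_def padic_zero_def by simp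
qed

definition Lf :: nat where "Lf = (SOME L. \<forall>\<xi>\<in>sph. \<not> zb (int L) (poly_eval p n f \<xi>))"

lemma Lf: "\<xi> \<in> sph \<Longrightarrow> \<not> zb (int Lf) (poly_eval p n f \<xi>)"
  using someI_ex[OF lower_digit] unfolding Lf_def by blast

lemma decomp:
  assumes "\<xi> \<in> qpn p n" "\<xi> \<noteq> padic_vzero"
  obtains w where "padic_norm p n \<xi> = real p powi (- w)" "vsh (- w) \<xi> \<in> sph" "\<xi> = vsh w (vsh (- w) \<xi>)"
proof -
  obtain w where w: "padic_norm p n \<xi> = real p powi (- w)" "\<forall>j<n. zb w (\<xi> j)" "\<exists>j<n. \<xi> j w \<noteq> 0"
    using norm_decomp[OF assms(1) n p assms(2)] by auto
  have "vsh (- w) \<xi> \<in> sph"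
    unfolding sph_def
  proof (intro CollectI conjI allI impI)
    show "vsh (- w) \<xi> \<in> qpn p n" by (rule vsh_qpn[OF assms(1)])
  next
    fix j assume "j < n"
    thus "zp p (vsh (- w) \<xi> j)" unfolding zp_def vsh_def
      using psh_carrier qpn_carrier[OF assms(1)] zb_psh[of w "\<xi> j" "- w"] w(2) by auto
  next
    show "\<exists>j<n. vsh (- w) \<xi> j 0 \<noteq> 0" using w(3) unfolding vsh_def psh_def by auto
  qed
  moreover have "\<xi> = vsh w (vsh (- w) \<xi>)" by simp
  ultimately show ?thesis using that w(1) by blast
qed

lemma sph_qpn: "\<xi> \<in> sph \<Longrightarrow> \<xi> \<in> qpn p n" unfolding sph_def by auto

lemma sph_nonzero: "\<xi> \<in> sph \<Longrightarrow> poly_eval p n f \<xi> \<noteq> padic_zero"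
  using Lf[of \<xi>] unfolding zb_def padic_zero_def by auto

lemma upper:
  assumes "\<xi> \<in> qpn p n"
  shows "padic_abs p (poly_eval p n f \<xi>) \<le> padic_norm p n \<xi> ^ d"
proof (cases "\<xi> = padic_vzero")
  case True thus ?thesis using f_zero_iff[OF assms] by (simp add: norm_nonneg[OF n])
next
  case False
  then obtain w where w: "padic_norm p n \<xi> = real p powi (- w)" "vsh (- w) \<xi> \<in> sph" "\<xi> = vsh w (vsh (- w) \<xi>)"
    using decomp[OF assms] by metis
  let ?y = "poly_eval p n f (vsh (- w) \<xi>)"
  have fy: "poly_eval p n f \<xi> = psh (w * int d) ?y" using f_vsh[OF sph_qpn[OF w(2)], of w] w(3) by simp
  have yz: "zp p ?y" using f_zp w(2) unfolding sph_def by auto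
  have "padic_abs p ?y \<le> real p powi (- 0)" using abs_le_iff[of ?y p 0] yz p unfolding zp_def by simp
  hence "padic_abs p (poly_eval p n f \<xi>) \<le> real p powi (- (w * int d))"
    unfolding fy abs_psh[OF f_carrier[OF sph_qpn[OF w(2)]] p0] using p by simp
  also have "\<dots> = padic_norm p n \<xi> ^ d" unfolding w(1) by (simp add: power_int_power')
  finally show ?thesis .
qed

lemma lower:
  assumes "\<xi> \<in> qpn p n"
  shows "padic_abs p (poly_eval p n f \<xi>) \<ge> real p powi (- int Lf) * padic_norm p n \<xi> ^ d"
proof (cases "\<xi> = padic_vzero")
  case True
  have "(0::real) ^ d = 0" using d by simp
  thus ?thesis using f_zero_iff[OF assms] True norm_zero_iff[OF assms n p0] d by (simp add: power_0_left)
next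
  case False
  then obtain w where w: "padic_norm p n \<xi> = real p powi (- w)" "vsh (- w) \<xi> \<in> sph" "\<xi> = vsh w (vsh (- w) \<xi>)"
    using decomp[OF assms] by metis
  let ?y = "poly_eval p n f (vsh (- w) \<xi>)"
  have fy: "poly_eval p n f \<xi> = psh (w * int d) ?y" using f_vsh[OF sph_qpn[OF w(2)], of w] w(3) by simp
  have yc: "?y \<in> padic_carrier p" using f_carrier[OF sph_qpn[OF w(2)]] .
  have "\<not> padic_abs p ?y \<le> real p powi (- int Lf)" using abs_le_iff[OF yc p] Lf[OF w(2)] by simp
  hence "padic_abs p ?y \<ge> real p powi (- int Lf)" by simp
  hence "padic_abs p (poly_eval p n f \<xi>) \<ge> real p powi (- (w * int d)) * real p powi (- int Lf)"
    unfolding fy abs_psh[OF yc p0] using p by (intro mult_left_mono) auto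
  moreover have "real p powi (- (w * int d)) = padic_norm p n \<xi> ^ d"
    unfolding w(1) by (simp add: power_int_power')
  ultimately show ?thesis by (simp add: mult.commute)
qed

lemma add_small_digit:
  assumes "zp p a" "zp p b" "zb m b" "i < m"
  shows "padic_add p b a i = a i"
proof -
  have "padic_add p b a i = padic_add p padic_zero a i"
    by (rule zp_add_cong[OF assms(2,1) zp_zero[OF p0] assms(1) p0 _ _ assms(4)])
      (use assms(3) in \<open>auto simp: zb_def padic_zero_def\<close>)
  thus ?thesis using add_zero_left[of a p] assms(1) p0 unfolding zp_def by simp
qed

lemma abs_same_digits:
  assumes "a \<in> padic_carrier p" "b \<in> padic_carrier p" "\<not> zb m a" "\<And>i. i < m \<Longrightarrow> a i = b i"
  shows "padic_abs p a = padic_abs p b"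
proof -
  have a0: "a \<noteq> padic_zero" using assms(3) unfolding zb_def padic_zero_def by auto
  obtain v where v: "a v \<noteq> 0" "zb v a" using val_exists[OF assms(1) a0] by auto
  have "v < m" using v assms(3) unfolding zb_def by (meson not_le order.trans order_less_le_trans)
  hence "b v \<noteq> 0" "zb v b" using v assms(4) unfolding zb_def by auto
  thus ?thesis using abs_eq[OF v] abs_eq[of b v p] by simp
qed

lemma local_const:
  assumes "\<xi> \<in> qpn p n" "\<xi> \<noteq> padic_vzero" "\<eta> \<in> qpn p n"
    and "padic_norm p n \<xi> = real p powi (- w)"
    and "\<And>j. j < n \<Longrightarrow> zb (w + int Lf + 1) (\<eta> j)"
  shows "padic_abs p (poly_eval p n f (vadd p n \<eta> \<xi>)) = padic_abs p (poly_eval p n f \<xi>)"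
proof -
  obtain w' where w': "padic_norm p n \<xi> = real p powi (- w')" "vsh (- w') \<xi> \<in> sph" "\<xi> = vsh w' (vsh (- w') \<xi>)"
    using decomp[OF assms(1,2)] by metis
  have pp: "real p > 1" using p by simp
  have "real p powi (- w') = real p powi (- w)" using w' assms(4) by simp
  hence "- w' \<le> - w" "- w \<le> - w'" using powi_le_iff[OF pp] by (metis order.refl)+
  hence "w' = w" by simp
  hence w: "vsh (- w) \<xi> \<in> sph" using w' by simp
  let ?x = "vsh (- w) \<xi>" and ?e = "vsh (- w) \<eta>"
  have xq: "?x \<in> qpn p n" "?e \<in> qpn p n" using vsh_qpn assms by auto
  have zx: "\<And>j. j < n \<Longrightarrow> zp p (?x j)" using w unfolding sph_def by auto
  have ze: "\<And>j. j < n \<Longrightarrow> zp p (?e j)" "\<And>j. j < n \<Longrightarrow> zb (int Lf + 1) (?e j)"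
  proof -
    fix j assume j: "j < n"
    have "zb (w + int Lf + 1 + - w) (?e j)" unfolding vsh_def by (rule zb_psh[OF assms(5)[OF j]])
    thus "zb (int Lf + 1) (?e j)" by simp
    hence "zb 0 (?e j)" by (rule zb_mono) simp
    moreover have "?e j \<in> padic_carrier p" unfolding vsh_def by (rule psh_carrier[OF qpn_carrier[OF assms(3) j]])
    ultimately show "zp p (?e j)" unfolding zp_def by simp
  qed
  have ex: "vadd p n \<eta> \<xi> = vsh w (vadd p n ?e ?x)"
    using vsh_vadd[OF xq(2) xq(1) p0, of w] by simp
  have zs: "\<And>j. j < n \<Longrightarrow> zp p (vadd p n ?e ?x j)" unfolding vadd_def using zp_add ze zx p0 by auto
  have fc: "poly_eval p n f (vadd p n ?e ?x) i = poly_eval p n f ?x i" if "i < int Lf + 1" for i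
  proof (rule poly_cong[OF _ zs zx p _ that])
    fix j i assume "j < n" "i < int Lf + 1"
    thus "vadd p n ?e ?x j i = ?x j i" unfolding vadd_def using add_small_digit[OF zx ze(1) ze(2)] by auto
  qed (use coef_zp in auto)
  have "padic_abs p (poly_eval p n f (vadd p n ?e ?x)) = padic_abs p (poly_eval p n f ?x)"
    by (rule abs_same_digits[OF _ _ Lf[OF w], symmetric])
      (use f_carrier xq vadd_qpn p0 fc in auto)
  thus ?thesis
    unfolding ex f_vsh[OF vadd_qpn[OF xq(2,1) p0]]
    using w'(3) \<open>w' = w\<close> f_vsh[OF xq(1), of w]
    by (simp add: abs_psh[OF f_carrier[OF vadd_qpn[OF xq(2,1) p0]] p0] abs_psh[OF f_carrier[OF xq(1)] p0])
qed

end

locale haar =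
  fixes p n :: nat and M :: "padicvec measure"
  assumes p: "p > 1" and n: "n \<ge> 1" and haar: "padic_haar p n M"
begin

lemma p0: "p > 0" using p by simp

lemma space_M: "space M = qpn p n" using haar unfolding padic_haar_def by auto

lemma sets_M: "sets M = sigma_sets (qpn p n) {padic_ball p n a k | a k. a \<in> qpn p n}"
  using haar unfolding padic_haar_def by auto

lemma inv: "a \<in> qpn p n \<Longrightarrow> A \<in> sets M \<Longrightarrow> vadd p n a ` A \<in> sets M \<and> emeasure M (vadd p n a ` A) = emeasure M A"
  using haar unfolding padic_haar_def by auto

lemma ball_sets: "a \<in> qpn p n \<Longrightarrow> padic_ball p n a k \<in> sets M"
  unfolding sets_M by (rule sigma_sets.Basic) auto

definition B :: "int \<Rightarrow> padicvec set" where
  "B k = {z \<in> qpn p n. \<forall>j<n. zb (- k) (z j)}"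

lemma B_ball: "B k = padic_ball p n padic_vzero k"
proof -
  have "padic_ball p n padic_vzero k = {z \<in> qpn p n. padic_norm p n z \<le> real p powi k}"
  proof (intro set_eqI iffI)
    fix x assume "x \<in> padic_ball p n padic_vzero k"
    then obtain z where "z \<in> qpn p n" "padic_norm p n z \<le> real p powi k" "x = vadd p n padic_vzero z"
      unfolding padic_ball_def by auto
    thus "x \<in> {z \<in> qpn p n. padic_norm p n z \<le> real p powi k}" using vadd_vzero_left[OF _ p0] by simp
  next
    fix x assume "x \<in> {z \<in> qpn p n. padic_norm p n z \<le> real p powi k}"
    thus "x \<in> padic_ball p n padic_vzero k" unfolding padic_ball_def using vadd_vzero_left[OF _ p0]
      by (intro CollectI exI[of _ x]) auto
  qed
  also have "\<dots> = B k" unfolding B_def using norm_le_iff[OF _ n p, of _ "- k"] by auto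
  finally show ?thesis ..
qed

lemma B_sets: "B k \<in> sets M"
  unfolding B_ball by (rule ball_sets[OF vzero_qpn[OF p0]])

lemma B_qpn: "B k \<subseteq> qpn p n" unfolding B_def by auto

lemma B_norm: "z \<in> qpn p n \<Longrightarrow> z \<in> B k \<longleftrightarrow> padic_norm p n z \<le> real p powi k"
  unfolding B_def using norm_le_iff[OF _ n p, of z "- k"] by auto

lemma B_mono: "k \<le> k' \<Longrightarrow> B k \<subseteq> B k'"
  unfolding B_def using zb_mono by auto

definition cw :: "int \<Rightarrow> (nat \<Rightarrow> nat) \<Rightarrow> padicvec" where
  "cw k w = (\<lambda>j. if j < n then (\<lambda>i. if i = - (k + 1) then w j else 0) else padic_zero)"

lemma cw_qpn: "w \<in> {..<n} \<rightarrow>\<^sub>E {..<p} \<Longrightarrow> cw k w \<in> qpn p n"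
  unfolding cw_def by (rule qpnI) (auto simp: padic_carrier_def p0 PiE_iff intro!: exI[of _ "- (k+1)"])

lemma piece:
  assumes w: "w \<in> {..<n} \<rightarrow>\<^sub>E {..<p}"
  shows "vadd p n (cw k w) ` B k = {\<xi> \<in> B (k + 1). \<forall>j<n. \<xi> j (- (k + 1)) = w j}"
proof (intro set_eqI iffI)
  fix \<xi> assume "\<xi> \<in> vadd p n (cw k w) ` B k"
  then obtain z where z: "z \<in> B k" "\<xi> = vadd p n (cw k w) z" by auto
  have zq: "z \<in> qpn p n" using z B_qpn by auto
  have d: "\<xi> j = (\<lambda>i. cw k w j i + z j i)" if "j < n" for j
  proof -
    have "padic_add p (cw k w j) (z j) = (\<lambda>i. cw k w j i + z j i)"
      by (rule add_disjoint[OF qpn_carrier[OF cw_qpn[OF w] that] qpn_carrier[OF zq that] p0])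
        (use z(1) that in \<open>auto simp: cw_def B_def zb_def\<close>)
    thus ?thesis using that z(2) unfolding vadd_def by simp
  qed
  have "\<xi> \<in> qpn p n" using z(2) vadd_qpn[OF cw_qpn[OF w] zq p0] by simp
  moreover have "\<forall>j<n. zb (- (k + 1)) (\<xi> j)"
    using d z(1) unfolding B_def zb_def cw_def by auto
  moreover have "\<forall>j<n. \<xi> j (- (k + 1)) = w j"
    using d z(1) unfolding B_def zb_def cw_def by auto
  ultimately show "\<xi> \<in> {\<xi> \<in> B (k + 1). \<forall>j<n. \<xi> j (- (k + 1)) = w j}" unfolding B_def by auto
next
  fix \<xi> assume "\<xi> \<in> {\<xi> \<in> B (k + 1). \<forall>j<n. \<xi> j (- (k + 1)) = w j}"
  hence x: "\<xi> \<in> qpn p n" "\<forall>j<n. zb (- (k + 1)) (\<xi> j)" "\<forall>j<n. \<xi> j (- (k + 1)) = w j"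
    unfolding B_def by auto
  define z where "z = (\<lambda>j. if j < n then (\<xi> j)(- (k + 1) := 0) else padic_zero)"
  have zq: "z \<in> qpn p n"
  proof (rule qpnI)
    fix j assume j: "j < n"
    have c: "\<xi> j \<in> padic_carrier p" using qpn_carrier[OF x(1) j] .
    then obtain N where "\<forall>i<N. \<xi> j i = 0" unfolding padic_carrier_def by auto
    thus "z j \<in> padic_carrier p" using j carrier_less[OF c] p0 unfolding z_def padic_carrier_def by auto
  qed (auto simp: z_def)
  have zB: "z \<in> B k" unfolding B_def using zq x(2) by (auto simp: z_def zb_def)
  have "vadd p n (cw k w) z = \<xi>"
  proof
    fix j show "vadd p n (cw k w) z j = \<xi> j"
    proof (cases "j < n")
      case True
      have "padic_add p (cw k w j) (z j) = (\<lambda>i. cw k w j i + z j i)"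
        by (rule add_disjoint[OF qpn_carrier[OF cw_qpn[OF w] True] qpn_carrier[OF zq True] p0])
          (use True in \<open>auto simp: cw_def z_def\<close>)
      also have "\<dots> = \<xi> j" using True x(3) by (auto simp: cw_def z_def fun_eq_iff)
      finally show ?thesis using True unfolding vadd_def by simp
    next
      case False thus ?thesis using qpn_out[OF x(1) False] unfolding vadd_def by simp
    qed
  qed
  thus "\<xi> \<in> vadd p n (cw k w) ` B k" using zB by (metis image_eqI)
qed

lemma B_step: "emeasure M (B (k + 1)) = of_nat (p ^ n) * emeasure M (B k)"
proof -
  let ?W = "{..<n} \<rightarrow>\<^sub>E {..<p}"
  let ?F = "\<lambda>w. vadd p n (cw k w) ` B k"
  have cov: "B (k + 1) = (\<Union>w\<in>?W. ?F w)"
  proof (intro set_eqI iffI)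
    fix \<xi> assume x: "\<xi> \<in> B (k + 1)"
    define w where "w = restrict (\<lambda>j. \<xi> j (- (k + 1))) {..<n}"
    have "w \<in> ?W" unfolding w_def using x carrier_less[OF qpn_carrier] unfolding B_def by auto
    moreover have "\<xi> \<in> ?F w" unfolding piece[OF \<open>w \<in> ?W\<close>] using x unfolding w_def by auto
    ultimately show "\<xi> \<in> (\<Union>w\<in>?W. ?F w)" by blast
  qed (use piece in auto)
  have disj: "disjoint_family_on ?F ?W"
    unfolding disjoint_family_on_def
  proof (intro ballI impI)
    fix w w' assume w: "w \<in> ?W" "w' \<in> ?W" "w \<noteq> w'"
    then obtain j where j: "j < n" "w j \<noteq> w' j" by (metis PiE_ext lessThan_iff)
    show "?F w \<inter> ?F w' = {}" unfolding piece[OF w(1)] piece[OF w(2)] using j by auto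
  qed
  have "emeasure M (B (k + 1)) = (\<Sum>w\<in>?W. emeasure M (?F w))"
  proof -
    have "finite ?W" by (intro finite_PiE) auto
    thus ?thesis unfolding cov by (intro sum_emeasure[symmetric]) (use inv[OF cw_qpn B_sets] disj in auto)
  qed
  also have "\<dots> = (\<Sum>w\<in>?W. emeasure M (B k))" using inv[OF cw_qpn B_sets] by simp
  also have "\<dots> = of_nat (card ?W) * emeasure M (B k)" by simp
  also have "card ?W = p ^ n" by (simp add: card_PiE)
  finally show ?thesis .
qed

lemma B0: "emeasure M (B 0) = 1"
proof -
  have "B 0 = zpn p n" unfolding B_def zpn_def zb_def by auto
  thus ?thesis using haar unfolding padic_haar_def by simp
qed

lemma B_measure: "emeasure M (B k) = ennreal (real p powi (int n * k))"
proof (cases "k \<ge> 0")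
  case True
  thus ?thesis
  proof (induction k rule: int_ge_induct)
    case base thus ?case using B0 by simp
  next
    case (step i)
    have e1: "int n * (i + 1) = int n * i + int n" by (simp add: algebra_simps)
    have "real p powi (int n * i + int n) = real p powi (int n * i) * real p powi (int n)"
      by (rule power_int_add) (use p0 in simp)
    hence "real p powi (int n * (i + 1)) = real p ^ n * real p powi (int n * i)"
      unfolding e1 by simp
    thus ?case using B_step[of i] step.IH p0 by (simp add: ennreal_mult' ennreal_of_nat_eq_real_of_nat)
  qed
next
  case False
  hence "k \<le> 0" by simp
  thus ?thesis
  proof (induction k rule: int_le_induct)
    case base thus ?case using B0 by simp
  next
    case (step i)
    have e1: "int n * i = int n * (i - 1) + int n" by (simp add: right_diff_distrib)
    have "real p powi (int n * (i - 1) + int n) = real p powi (int n * (i - 1)) * real p powi (int n)"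
      by (rule power_int_add) (use p0 in simp)
    hence e: "real p powi (int n * i) = real p ^ n * real p powi (int n * (i - 1))"
      by (subst e1) simp
    have "of_nat (p ^ n) * emeasure M (B (i - 1)) = of_nat (p ^ n) * ennreal (real p powi (int n * (i - 1)))"
      using B_step[of "i - 1"] step.IH e p0 by (simp add: ennreal_mult' ennreal_of_nat_eq_real_of_nat)
    moreover have nt: "(of_nat (p ^ n) :: ennreal) \<noteq> top" "(of_nat (p ^ n) :: ennreal) \<noteq> 0"
      using p0 by (simp_all only: ennreal_of_nat_neq_top of_nat_eq_0_iff power_eq_0_iff) simp_all
    ultimately show ?case by (metis ennreal_mult_cancel_left)
  qed
qed

section \<open>Translation invariance\<close>

lemma trans_measurable:
  assumes a: "a \<in> qpn p n"
  shows "vadd p n a \<in> measurable M M"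
proof (rule measurableI)
  fix x assume "x \<in> space M" thus "vadd p n a x \<in> space M" using vadd_qpn a p0 space_M by auto
next
  fix A assume A: "A \<in> sets M"
  have "vadd p n a -` A \<inter> space M = vadd p n (vneg p n a) ` A"
  proof (intro set_eqI iffI)
    fix z assume z: "z \<in> vadd p n a -` A \<inter> space M"
    hence "z = vadd p n (vneg p n a) (vadd p n a z)" using vneg_cancel[OF a _ p0] space_M by auto
    thus "z \<in> vadd p n (vneg p n a) ` A" using z by auto
  next
    fix z assume "z \<in> vadd p n (vneg p n a) ` A"
    then obtain y where y: "y \<in> A" "z = vadd p n (vneg p n a) y" by auto
    have yq: "y \<in> qpn p n" using sets.sets_into_space[OF A] y space_M by auto
    have "vadd p n a z = y" using vneg_cancel'[OF a yq p0] y by simp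
    moreover have "z \<in> space M" using vadd_qpn[OF vneg_qpn[OF a p0] yq p0] y space_M by simp
    ultimately show "z \<in> vadd p n a -` A \<inter> space M" using y by auto
  qed
  thus "vadd p n a -` A \<inter> space M \<in> sets M" using inv[OF vneg_qpn[OF a p0] A] by simp
qed

lemma distr_trans:
  assumes a: "a \<in> qpn p n"
  shows "distr M M (vadd p n a) = M"
proof (rule measure_eqI)
  fix A assume "A \<in> sets (distr M M (vadd p n a))"
  hence A: "A \<in> sets M" by simp
  have "vadd p n a -` A \<inter> space M = vadd p n (vneg p n a) ` A"
  proof (intro set_eqI iffI)
    fix z assume z: "z \<in> vadd p n a -` A \<inter> space M"
    hence "z = vadd p n (vneg p n a) (vadd p n a z)" using vneg_cancel[OF a _ p0] space_M by auto
    thus "z \<in> vadd p n (vneg p n a) ` A" using z by auto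
  next
    fix z assume "z \<in> vadd p n (vneg p n a) ` A"
    then obtain y where y: "y \<in> A" "z = vadd p n (vneg p n a) y" by auto
    have yq: "y \<in> qpn p n" using sets.sets_into_space[OF A] y space_M by auto
    have "vadd p n a z = y" using vneg_cancel'[OF a yq p0] y by simp
    moreover have "z \<in> space M" using vadd_qpn[OF vneg_qpn[OF a p0] yq p0] y space_M by simp
    ultimately show "z \<in> vadd p n a -` A \<inter> space M" using y by auto
  qed
  thus "emeasure (distr M M (vadd p n a)) A = emeasure M A"
    using emeasure_distr[OF trans_measurable[OF a] A] inv[OF vneg_qpn[OF a p0] A] by simp
qed simp

lemma integral_trans:
  fixes g :: "padicvec \<Rightarrow> complex"
  assumes a: "a \<in> qpn p n" and g: "integrable M g"
  shows "integrable M (\<lambda>x. g (vadd p n a x))" "(\<integral>x. g (vadd p n a x) \<partial>M) = integral\<^sup>L M g"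
proof -
  have gm: "g \<in> borel_measurable M" using g by auto
  show "integrable M (\<lambda>x. g (vadd p n a x))"
    using integrable_distr_eq[OF trans_measurable[OF a] gm] g distr_trans[OF a] by simp
  show "(\<integral>x. g (vadd p n a x) \<partial>M) = integral\<^sup>L M g"
    using integral_distr[OF trans_measurable[OF a] gm] distr_trans[OF a] by simp
qed

end

lemma exp_neg_le_pow:
  assumes "y > 0" "m \<ge> 1"
  shows "exp (- y) \<le> (real m / y) ^ m"
proof -
  have "y / real m < exp (y / real m)" using exp_ge_add_one_self[of "y / real m"] by linarith
  hence "(y / real m) ^ m \<le> exp (y / real m) ^ m"
    using assms by (intro power_mono) auto
  also have "\<dots> = exp y" using exp_of_nat_mult[of m "y / real m"] assms by simp
  finally have le: "(y / real m) ^ m \<le> exp y" .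
  have pos: "(y / real m) ^ m > 0" using assms by simp
  have "exp (- y) = inverse (exp y)" by (simp add: exp_minus)
  also have "\<dots> \<le> inverse ((y / real m) ^ m)" using le pos by (intro le_imp_inverse_le) auto
  also have "\<dots> = (real m / y) ^ m" by (simp add: power_inverse[symmetric])
  finally show ?thesis .
qed

lemma exp_diff_le:
  assumes "0 \<le> a" "a \<le> K" "0 \<le> b" "b \<le> K" "0 \<le> (t::real)"
  shows "\<bar>exp (- t * a) - exp (- t * b)\<bar> \<le> t * K"
proof -
  have "exp (- t * a) \<le> 1" "exp (- t * b) \<le> 1" using assms by (auto intro: mult_nonneg_nonneg)
  moreover have "1 - t * a \<le> exp (- t * a)" "1 - t * b \<le> exp (- t * b)"
    using exp_ge_add_one_self[of "- t * a"] exp_ge_add_one_self[of "- t * b"] by simp_all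
  moreover have "t * a \<le> t * K" "t * b \<le> t * K" using assms by (auto intro: mult_left_mono)
  ultimately show ?thesis by linarith
qed

lemma one_minus_cos_pos:
  assumes "0 < c" "c < p"
  shows "1 - cos (2 * pi * real c / real p) > 0"
proof -
  have "0 < pi * real c / real p" using assms by simp
  moreover have "pi * real c / real p < pi" using assms by (simp add: field_simps)
  ultimately have "sin (pi * real c / real p) > 0" by (rule sin_gt_zero)
  moreover have "cos (2 * (pi * real c / real p)) = 1 - 2 * sin (pi * real c / real p) ^ 2"
    by (rule cos_double_sin)
  ultimately show ?thesis by (simp add: mult.assoc)
qed

lemma cmod_one_minus_cis: "cmod (1 - cis \<theta>) \<ge> 1 - cos \<theta>"
proof -
  have "\<bar>Re (1 - cis \<theta>)\<bar> \<le> cmod (1 - cis \<theta>)" by (rule abs_Re_le_cmod)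
  thus ?thesis by simp
qed

locale main = ellf p n d f + haar p n M for p n d f M +
  fixes \<beta> :: real
  assumes beta: "\<beta> > 0"
begin

definition \<phi> :: "real \<Rightarrow> padicvec \<Rightarrow> real" where
  "\<phi> t \<xi> = exp (- t * padic_abs p (poly_eval p n f \<xi>) powr \<beta>)"

definition g :: "padicvec \<Rightarrow> real \<Rightarrow> padicvec \<Rightarrow> complex" where
  "g x t \<xi> = padic_char p (padic_dot p n x \<xi>) * complex_of_real (\<phi> t \<xi>)"

lemma hk: "heat_kernel p n f \<beta> M x t = integral\<^sup>L M (g x t)"
  unfolding heat_kernel_def g_def \<phi>_def ..

lemma phi_pos: "\<phi> t \<xi> > 0" unfolding \<phi>_def by simp

lemma norm_g: "cmod (g x t \<xi>) = \<phi> t \<xi>"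
  unfolding g_def using phi_pos[of t \<xi>] by (simp add: norm_mult)

definition \<delta> :: real where
  "\<delta> = Min ((\<lambda>c. 1 - cos (2 * pi * real c / real p)) ` {1..<p})"

lemma delta_pos: "\<delta> > 0"
proof -
  have "finite ((\<lambda>c. 1 - cos (2 * pi * real c / real p)) ` {1..<p})" by simp
  moreover have "(\<lambda>c. 1 - cos (2 * pi * real c / real p)) ` {1..<p} \<noteq> {}" using p by auto
  ultimately show ?thesis unfolding \<delta>_def using one_minus_cos_pos by (subst Min_gr_iff) auto
qed

lemma delta_le: "0 < c \<Longrightarrow> c < p \<Longrightarrow> \<delta> \<le> 1 - cos (2 * pi * real c / real p)"
  unfolding \<delta>_def by (intro Min_le) auto

lemma f_pow_bound:
  assumes "\<zeta> \<in> B r"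
  shows "padic_abs p (poly_eval p n f \<zeta>) powr \<beta> \<le> ((real p powi r) ^ d) powr \<beta>"
proof -
  have zq: "\<zeta> \<in> qpn p n" using assms B_qpn by auto
  have "padic_norm p n \<zeta> \<le> real p powi r" using B_norm[OF zq] assms by simp
  hence "padic_norm p n \<zeta> ^ d \<le> (real p powi r) ^ d" using norm_nonneg[OF n] by (intro power_mono) auto
  hence "padic_abs p (poly_eval p n f \<zeta>) \<le> (real p powi r) ^ d" using upper[OF zq] by linarith
  thus ?thesis using beta abs_nonneg by (intro powr_mono2) auto
qed

lemma bound2:
  assumes x: "x \<in> qpn p n" "x \<noteq> padic_vzero" and t: "t > 0"
  shows "cmod (heat_kernel p n f \<beta> M x t) \<le>
           t * (real p powi (int Lf + 1)) powr (\<beta> * real d + real n) *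
           padic_norm p n x powr (- (\<beta> * real d + real n)) / \<delta>"
proof (cases "integrable M (g x t)")
  case False
  hence "heat_kernel p n f \<beta> M x t = 0" unfolding hk by (rule not_integrable_integral_eq)
  thus ?thesis using t delta_pos by simp
next
  case int: True
  let ?q = "real p"
  have q1: "?q > 1" using p by simp
  obtain j0 where j0: "j0 < n" "padic_norm p n x = padic_abs p (x j0)" using norm_attained[OF n] by blast
  have xj0: "x j0 \<noteq> padic_zero"
  proof
    assume "x j0 = padic_zero"
    hence "padic_norm p n x = 0" using j0 by simp
    thus False using norm_zero_iff[OF x(1) n p0] x(2) by simp
  qed
  obtain v where v: "x j0 v \<noteq> 0" "zb v (x j0)" using val_exists[OF qpn_carrier[OF x(1) j0(1)] xj0] by blast
  have nx: "padic_norm p n x = ?q powi (- v)" using j0(2) abs_eq[OF v] by simp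
  define u where "u = psh (- v - 1) padic_one"
  have uc: "u \<in> padic_carrier p" unfolding u_def by (rule psh_carrier[OF one_carrier[OF p]])
  have uz: "zb (- v - 1) u" unfolding u_def using zb_psh[OF zb_one, of "- v - 1"] by simp
  define \<eta> where "\<eta> = (\<lambda>j. if j = j0 then u else padic_zero)"
  have eq: "\<eta> \<in> qpn p n" unfolding \<eta>_def by (rule qpnI) (use uc j0 p0 in auto)
  define e where "e = padic_char p (padic_dot p n x \<eta>)"
  have e_eq: "e = padic_char p (psh (- v - 1) (x j0))"
  proof -
    have "padic_mult p (x j0) u = psh (0 + (- v - 1)) (padic_mult p (x j0) padic_one)"
      unfolding u_def using psh_mult[OF qpn_carrier[OF x(1) j0(1)] one_carrier[OF p] p0, of 0 "- v - 1"] by simp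
    also have "\<dots> = psh (- v - 1) (x j0)" using mult_one_right[OF qpn_carrier[OF x(1) j0(1)] p] by simp
    finally show ?thesis unfolding e_def \<eta>_def using char_dot_single[OF x(1) uc p0 j0(1)] by simp
  qed
  define c where "c = x j0 v"
  have c: "0 < c" "c < p" unfolding c_def using v carrier_less[OF qpn_carrier[OF x(1) j0(1)]] by auto
  have frac: "padic_frac p (psh (- v - 1) (x j0)) = of_nat c / of_nat p"
  proof -
    let ?y = "psh (- v - 1) (x j0)"
    have zy: "zb (- 1) ?y" using zb_psh[OF v(2), of "- v - 1"] by simp
    have "padic_trunc p ?y (- 1 + 1) = padic_trunc p ?y (- 1) + of_nat (?y (- 1)) * of_nat p powi (- 1)"
      by (rule trunc_Suc[OF zy])
    moreover have "padic_trunc p ?y (- 1) = 0" by (rule trunc_below[OF zy])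
    moreover have "?y (- 1) = c" unfolding c_def psh_def by simp
    ultimately show ?thesis unfolding padic_frac_def by (simp add: power_int_minus divide_inverse)
  qed
  have e_cis: "e = cis (2 * pi * real c / real p)"
    unfolding e_eq padic_char_def frac by (simp add: of_rat_divide)
  have e_norm: "cmod e = 1" unfolding e_def by simp
  have ce: "cnj e * e = 1" using complex_norm_square[of e] e_norm by (simp add: mult.commute)
  have de: "cmod (1 - e) \<ge> \<delta>"
    using cmod_one_minus_cis[of "2 * pi * real c / real p"] delta_le[OF c] e_cis by simp
  define T where "T = vadd p n \<eta>"
  have i1: "integrable M (\<lambda>\<xi>. g x t (T \<xi>))" and e1: "(\<integral>\<xi>. g x t (T \<xi>) \<partial>M) = integral\<^sup>L M (g x t)"
    unfolding T_def using integral_trans[OF eq int] by auto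
  define g2 where "g2 = (\<lambda>\<xi>. padic_char p (padic_dot p n x \<xi>) * complex_of_real (\<phi> t (T \<xi>)))"
  have g2eq: "g2 \<xi> = cnj e * g x t (T \<xi>)" if "\<xi> \<in> space M" for \<xi>
  proof -
    have "g x t (T \<xi>) = e * g2 \<xi>"
      unfolding g_def g2_def T_def e_def
      using char_dot_vadd[OF x(1) _ eq p0, of \<xi>] that space_M by simp
    thus ?thesis using ce by (simp add: mult.assoc[symmetric])
  qed
  have "integrable M (\<lambda>\<xi>. cnj e * g x t (T \<xi>))" using i1 by simp
  hence i2: "integrable M g2"
  proof -
    have "integrable M g2 \<longleftrightarrow> integrable M (\<lambda>\<xi>. cnj e * g x t (T \<xi>))"
      by (rule Bochner_Integration.integrable_cong) (auto simp: g2eq)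
    thus ?thesis using \<open>integrable M (\<lambda>\<xi>. cnj e * g x t (T \<xi>))\<close> by simp
  qed
  have e2: "integral\<^sup>L M g2 = cnj e * integral\<^sup>L M (g x t)"
  proof -
    have "integral\<^sup>L M g2 = (\<integral>\<xi>. cnj e * g x t (T \<xi>) \<partial>M)"
      by (rule Bochner_Integration.integral_cong) (auto simp: g2eq)
    also have "\<dots> = cnj e * (\<integral>\<xi>. g x t (T \<xi>) \<partial>M)" by simp
    finally show ?thesis using e1 by simp
  qed
  let ?Z = "integral\<^sup>L M (g x t)"
  have e3: "(\<integral>\<xi>. g2 \<xi> - g x t \<xi> \<partial>M) = cnj e * ?Z - ?Z"
    using Bochner_Integration.integral_diff[OF i2 int] e2 by simp
  have i3: "integrable M (\<lambda>\<xi>. g2 \<xi> - g x t \<xi>)" using i2 int by auto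
  have nZ: "cmod (cnj e * ?Z - ?Z) = cmod ?Z * cmod (1 - e)"
  proof -
    have "cnj e * ?Z - ?Z = (cnj e - 1) * ?Z" by (simp add: algebra_simps)
    moreover have "cmod (cnj e - 1) = cmod (1 - e)"
      using complex_mod_cnj[of "e - 1"] by (simp add: norm_minus_commute)
    ultimately show ?thesis by (simp add: norm_mult)
  qed
  define r where "r = v + int Lf + 1"
  define K where "K = ((?q powi r) ^ d) powr \<beta>"
  have pt: "cmod (g2 \<xi> - g x t \<xi>) \<le> t * K * indicator (B r) \<xi>" if xi: "\<xi> \<in> qpn p n" for \<xi>
  proof -
    have "g2 \<xi> - g x t \<xi> = padic_char p (padic_dot p n x \<xi>) * complex_of_real (\<phi> t (T \<xi>) - \<phi> t \<xi>)"
      unfolding g2_def g_def by (simp add: algebra_simps)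
    hence n1: "cmod (g2 \<xi> - g x t \<xi>) = \<bar>\<phi> t (T \<xi>) - \<phi> t \<xi>\<bar>" by (simp only: norm_mult norm_char norm_of_real) simp
    show ?thesis
    proof (cases "\<xi> \<in> B r")
      case True
      have TB: "T \<xi> \<in> B r"
        unfolding B_def
      proof (intro CollectI conjI allI impI)
        show "T \<xi> \<in> qpn p n" unfolding T_def by (rule vadd_qpn[OF eq xi p0])
      next
        fix j assume j: "j < n"
        have "zb (- r) (\<eta> j)"
          unfolding \<eta>_def using zb_mono[OF uz, of "- r"] r_def by auto
        moreover have "zb (- r) (\<xi> j)" using True j unfolding B_def by auto
        ultimately show "zb (- r) (T \<xi> j)"
          unfolding T_def vadd_def using j add_zb[OF qpn_carrier[OF eq j] qpn_carrier[OF xi j] p0] by simp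
      qed
      have "\<bar>\<phi> t (T \<xi>) - \<phi> t \<xi>\<bar> \<le> t * K"
        unfolding \<phi>_def K_def
        by (rule exp_diff_le[OF _ f_pow_bound[OF TB] _ f_pow_bound[OF True]]) (use t in auto)
      thus ?thesis using n1 True by simp
    next
      case False
      have x0: "\<xi> \<noteq> padic_vzero"
      proof
        assume "\<xi> = padic_vzero"
        hence "padic_norm p n \<xi> = 0" using norm_zero_iff[OF xi n p0] by simp
        thus False using False B_norm[OF xi, of r] by simp
      qed
      obtain w where w: "padic_norm p n \<xi> = ?q powi (- w)" "\<forall>j<n. zb w (\<xi> j)" "\<exists>j<n. \<xi> j w \<noteq> 0"
        using norm_decomp[OF xi n p x0] by blast
      have "\<not> ?q powi (- w) \<le> ?q powi r" using False B_norm[OF xi, of r] w(1) by simp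
      hence "- w > r" using powi_le_iff[OF q1] by simp
      hence wle: "w + int Lf + 1 \<le> - v - 1" unfolding r_def by simp
      have "padic_abs p (poly_eval p n f (vadd p n \<eta> \<xi>)) = padic_abs p (poly_eval p n f \<xi>)"
      proof (rule local_const[OF xi x0 eq w(1)])
        fix j assume "j < n"
        show "zb (w + int Lf + 1) (\<eta> j)" unfolding \<eta>_def using zb_mono[OF uz wle] by auto
      qed
      hence "\<phi> t (T \<xi>) = \<phi> t \<xi>" unfolding \<phi>_def T_def by simp
      moreover have "0 \<le> K" unfolding K_def by simp
      ultimately show ?thesis using n1 t by simp
    qed
  qed
  have "ennreal (cmod ?Z * cmod (1 - e)) = ennreal (cmod (\<integral>\<xi>. g2 \<xi> - g x t \<xi> \<partial>M))"
    using e3 nZ by simp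
  also have "\<dots> \<le> (\<integral>\<^sup>+\<xi>. ennreal (cmod (g2 \<xi> - g x t \<xi>)) \<partial>M)"
    by (rule integral_norm_bound_ennreal[OF i3])
  also have "\<dots> \<le> (\<integral>\<^sup>+\<xi>. ennreal (t * K) * indicator (B r) \<xi> \<partial>M)"
  proof (rule nn_integral_mono)
    fix \<xi> assume "\<xi> \<in> space M"
    hence "ennreal (cmod (g2 \<xi> - g x t \<xi>)) \<le> ennreal (t * K * indicator (B r) \<xi>)"
      using pt space_M by (intro ennreal_leI) auto
    thus "ennreal (cmod (g2 \<xi> - g x t \<xi>)) \<le> ennreal (t * K) * indicator (B r) \<xi>"
      by (cases "\<xi> \<in> B r") (auto simp: indicator_def)
  qed
  also have "\<dots> = ennreal (t * K) * emeasure M (B r)" by (rule nn_integral_cmult_indicator[OF B_sets])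
  also have "\<dots> = ennreal (t * K * ?q powi (int n * r))"
    unfolding B_measure using t K_def by (simp add: ennreal_mult')
  finally have le: "cmod ?Z * cmod (1 - e) \<le> t * K * ?q powi (int n * r)"
    using t by (subst (asm) ennreal_le_iff) (auto simp: K_def)
  have qr: "?q powi r = ?q powi (int Lf + 1) * padic_norm p n x powr (- 1)"
  proof -
    have "?q powi r = ?q powi (int Lf + 1) * ?q powi v" unfolding r_def
      using power_int_add[of ?q "int Lf + 1" v] p0 by (simp add: add.commute add.left_commute)
    moreover have "padic_norm p n x powr (- 1) = ?q powi v"
      unfolding nx using p0 by (simp add: powr_minus powr_real_of_int' power_int_minus[symmetric])
    ultimately show ?thesis by simp
  qed
  have Kq: "K * ?q powi (int n * r) = (?q powi r) powr (\<beta> * real d + real n)"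
  proof -
    have qp: "?q powi r > 0" using p0 by simp
    have "K = (?q powi r) powr (\<beta> * real d)"
      unfolding K_def using qp by (simp add: powr_realpow[symmetric] powr_powr mult.commute)
    moreover have "?q powi (int n * r) = (?q powi r) powr real n"
      using qp by (simp add: powr_realpow power_int_mult mult.commute)
    ultimately show ?thesis by (simp add: powr_add)
  qed
  have nxp: "padic_norm p n x > 0" unfolding nx using p0 by simp
  have "(?q powi r) powr (\<beta> * real d + real n)
      = (?q powi (int Lf + 1)) powr (\<beta> * real d + real n) * padic_norm p n x powr (- (\<beta> * real d + real n))"
  proof -
    let ?E = "\<beta> * real d + real n" and ?A = "?q powi (int Lf + 1)" and ?X = "padic_norm p n x"
    have "(?A * ?X powr (- 1)) powr ?E = ?A powr ?E * (?X powr (- 1)) powr ?E"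
      by (rule powr_mult)
    also have "(?X powr (- 1)) powr ?E = ?X powr (- 1 * ?E)" by (rule powr_powr)
    also have "- 1 * ?E = - ?E" by simp
    finally show ?thesis unfolding qr .
  qed
  hence "cmod ?Z * cmod (1 - e) \<le> t * (?q powi (int Lf + 1)) powr (\<beta> * real d + real n) *
           padic_norm p n x powr (- (\<beta> * real d + real n))"
    using le Kq by (simp add: mult.assoc)
  moreover have "cmod ?Z * \<delta> \<le> cmod ?Z * cmod (1 - e)" using de by (intro mult_left_mono) auto
  ultimately have "cmod ?Z * \<delta> \<le> t * (?q powi (int Lf + 1)) powr (\<beta> * real d + real n) *
           padic_norm p n x powr (- (\<beta> * real d + real n))" by linarith
  thus ?thesis unfolding hk using delta_pos by (simp add: field_simps)
qed

end

lemma pow_powr_real: "(x::real) \<ge> 0 \<Longrightarrow> d \<ge> 1 \<Longrightarrow> (x ^ d) powr b = x powr (real d * b)"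
proof -
  assume x: "x \<ge> 0" and d: "d \<ge> 1"
  show ?thesis
  proof (cases "x = 0")
    case True thus ?thesis using d by (simp add: power_0_left)
  next
    case False
    hence "x > 0" using x by simp
    thus ?thesis by (simp add: powr_realpow[symmetric] powr_powr)
  qed
qed

lemma term_bound:
  fixes q s \<tau> :: real and k0 :: int and M0 n k :: nat
  assumes q: "q > 1" and s: "s > 0" and \<tau>: "\<tau> > 0" and M0: "M0 \<ge> 1"
    and k0: "\<tau> * q powr (real_of_int k0 * s) \<ge> 1"
  shows "(real M0 / (\<tau> * q powr (real_of_int (k0 + int k + 1) * s))) ^ M0 * q powr (real n * real_of_int (k0 + int k + 1))
         \<le> real M0 ^ M0 * q powr (real n * real_of_int k0) * (q powr (real n - s * real M0)) ^ (k + 1)"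
proof -
  define y where "y = real k + 1"
  have y: "real_of_int (k0 + int k + 1) = real_of_int k0 + y" unfolding y_def by simp
  have qy: "q powr (y * s) > 0" using q by simp
  have "\<tau> * q powr (real_of_int (k0 + int k + 1) * s) = (\<tau> * q powr (real_of_int k0 * s)) * q powr (y * s)"
    unfolding y by (simp add: distrib_right powr_add)
  also have "\<dots> \<ge> q powr (y * s)" using k0 qy by simp
  finally have ge: "\<tau> * q powr (real_of_int (k0 + int k + 1) * s) \<ge> q powr (y * s)" .
  have p1: "0 < \<tau> * q powr (real_of_int (k0 + int k + 1) * s)" using ge qy by linarith
  have pos: "0 < \<tau> * q powr (real_of_int (k0 + int k + 1) * s) * q powr (y * s)"
    by (rule mult_pos_pos[OF p1 qy])
  have "real M0 / (\<tau> * q powr (real_of_int (k0 + int k + 1) * s)) \<le> real M0 / q powr (y * s)"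
    using ge pos by (intro divide_left_mono) auto
  hence "(real M0 / (\<tau> * q powr (real_of_int (k0 + int k + 1) * s))) ^ M0 \<le> (real M0 / q powr (y * s)) ^ M0"
    using \<tau> q by (intro power_mono) auto
  also have "(real M0 / q powr (y * s)) ^ M0 = real M0 ^ M0 / q powr (y * s * real M0)"
    using q by (simp add: power_divide powr_realpow[symmetric] powr_powr)
  finally have a: "(real M0 / (\<tau> * q powr (real_of_int (k0 + int k + 1) * s))) ^ M0 \<le> real M0 ^ M0 / q powr (y * s * real M0)" .
  have "(real M0 / (\<tau> * q powr (real_of_int (k0 + int k + 1) * s))) ^ M0 * q powr (real n * real_of_int (k0 + int k + 1))
      \<le> real M0 ^ M0 / q powr (y * s * real M0) * q powr (real n * real_of_int (k0 + int k + 1))"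
    using a by (intro mult_right_mono) auto
  also have "\<dots> = real M0 ^ M0 * q powr (real n * real_of_int k0) * q powr ((real n - s * real M0) * y)"
    unfolding y using q by (simp add: powr_add[symmetric] powr_diff[symmetric] algebra_simps divide_inverse powr_minus[symmetric])
  also have "q powr ((real n - s * real M0) * y) = (q powr (real n - s * real M0)) ^ (k + 1)"
  proof -
    have "(q powr (real n - s * real M0)) ^ (k + 1) = (q powr (real n - s * real M0)) powr (real (k + 1))"
      by (subst powr_realpow) (use q in auto)
    also have "\<dots> = q powr ((real n - s * real M0) * real (k + 1))" by (rule powr_powr)
    finally show ?thesis unfolding y_def by (simp add: add.commute)
  qed
  finally show ?thesis .
qed

context main
begin

declare B_sets[measurable]

definition c0 :: real where "c0 = (real p powi (- int Lf)) powr \<beta>"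

lemma c0_pos: "c0 > 0" unfolding c0_def using p0 by simp

lemma phi_le:
  assumes "\<xi> \<in> qpn p n" "t > 0"
  shows "\<phi> t \<xi> \<le> exp (- (t * c0) * padic_norm p n \<xi> powr (real d * \<beta>))"
proof -
  have nn: "padic_norm p n \<xi> \<ge> 0" by (rule norm_nonneg[OF n])
  have "(real p powi (- int Lf) * padic_norm p n \<xi> ^ d) powr \<beta> \<le> padic_abs p (poly_eval p n f \<xi>) powr \<beta>"
    using lower[OF assms(1)] beta nn p0 by (intro powr_mono2) auto
  moreover have "(real p powi (- int Lf) * padic_norm p n \<xi> ^ d) powr \<beta> = c0 * padic_norm p n \<xi> powr (real d * \<beta>)"
    unfolding c0_def powr_mult using pow_powr_real[OF nn d] by simp
  ultimately have "c0 * padic_norm p n \<xi> powr (real d * \<beta>) \<le> padic_abs p (poly_eval p n f \<xi>) powr \<beta>" by simp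
  hence "- t * padic_abs p (poly_eval p n f \<xi>) powr \<beta> \<le> - (t * c0) * padic_norm p n \<xi> powr (real d * \<beta>)"
    using assms(2) by (simp add: mult.assoc)
  thus ?thesis unfolding \<phi>_def by simp
qed

lemma vzero_B: "padic_vzero \<in> B k"
  unfolding B_def using vzero_qpn[OF p0] by (auto simp: padic_vzero_def)

definition M0 :: nat where "M0 = nat \<lceil>real n / (\<beta> * real d)\<rceil> + 1"
definition \<rho> :: real where "\<rho> = real p powr (real n - \<beta> * real d * real M0)"
definition K1 :: real where "K1 = 1 + real M0 ^ M0 * (\<rho> / (1 - \<rho>))"

lemma s_pos: "\<beta> * real d > 0" using beta d by simp

lemma M0: "M0 \<ge> 1" "\<beta> * real d * real M0 > real n"
proof -
  show "M0 \<ge> 1" unfolding M0_def by simp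
  have "real n / (\<beta> * real d) \<le> real (nat \<lceil>real n / (\<beta> * real d)\<rceil>)" by linarith
  hence "real n / (\<beta> * real d) < real M0" unfolding M0_def by simp
  thus "\<beta> * real d * real M0 > real n" using s_pos by (simp add: field_simps)
qed

lemma rho: "0 < \<rho>" "\<rho> < 1"
proof -
  show "0 < \<rho>" unfolding \<rho>_def using p0 by simp
  have "real p powr (real n - \<beta> * real d * real M0) < real p powr 0"
    using M0(2) p by (intro powr_less_mono) auto
  thus "\<rho> < 1" unfolding \<rho>_def using p0 by simp
qed

lemma K1_pos: "K1 > 0"
proof -
  have "real M0 ^ M0 * (\<rho> / (1 - \<rho>)) \<ge> 0" using rho by simp
  thus ?thesis unfolding K1_def by linarith
qed

lemma nn_phi_bound:
  assumes t: "t > 0"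
  shows "(\<integral>\<^sup>+\<xi>. ennreal (\<phi> t \<xi>) \<partial>M) \<le> ennreal (K1 * real p ^ n * c0 powr (- (real n / (\<beta> * real d))) * t powr (- (real n / (\<beta> * real d))))"
proof -
  let ?q = "real p" and ?s = "\<beta> * real d"
  have q1: "?q > 1" using p by simp
  define \<tau> where "\<tau> = t * c0"
  have tau: "\<tau> > 0" unfolding \<tau>_def using t c0_pos by simp
  define k0 where "k0 = \<lceil>- ln \<tau> / (?s * ln ?q)\<rceil>"
  have lq: "ln ?q > 0" using q1 by simp
  have k0a: "\<tau> * ?q powr (real_of_int k0 * ?s) \<ge> 1"
  proof -
    define X where "X = ?s * ln ?q"
    have h: "real_of_int k0 \<ge> - ln \<tau> / X" unfolding k0_def X_def by linarith
    have pos: "X > 0" unfolding X_def using s_pos lq by simp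
    have "- ln \<tau> = (- ln \<tau> / X) * X" using pos by (simp add: field_simps)
    also have "\<dots> \<le> real_of_int k0 * X" using mult_right_mono[OF h less_imp_le[OF pos]] by simp
    finally have "- ln \<tau> \<le> real_of_int k0 * (?s * ln ?q)" unfolding X_def .
    hence "real_of_int k0 * ?s * ln ?q \<ge> - ln \<tau>" by (simp add: mult.assoc)
    hence "exp (real_of_int k0 * ?s * ln ?q) \<ge> exp (- ln \<tau>)" by simp
    hence "?q powr (real_of_int k0 * ?s) \<ge> 1 / \<tau>" using tau q1 by (simp add: powr_def exp_minus mult.commute mult.left_commute divide_inverse)
    thus ?thesis using tau by (simp add: field_simps)
  qed
  have k0b: "?q powr (real_of_int k0) \<le> ?q * \<tau> powr (- 1 / ?s)"
  proof -
    have h: "real_of_int k0 < - ln \<tau> / (?s * ln ?q) + 1" unfolding k0_def by linarith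
    have "real_of_int k0 * ln ?q < (- ln \<tau> / (?s * ln ?q) + 1) * ln ?q"
      using mult_strict_right_mono[OF h lq] .
    also have "\<dots> = - ln \<tau> / ?s + ln ?q" using s_pos lq by (simp add: field_simps)
    finally have "real_of_int k0 * ln ?q < - ln \<tau> / ?s + ln ?q" .
    hence "exp (real_of_int k0 * ln ?q) \<le> exp (ln ?q + (- 1 / ?s) * ln \<tau>)" by simp
    also have "\<dots> = exp (ln ?q) * exp ((- 1 / ?s) * ln \<tau>)" by (rule exp_add)
    also have "exp (ln ?q) = ?q" using q1 by simp
    also have "exp ((- 1 / ?s) * ln \<tau>) = \<tau> powr (- 1 / ?s)" using tau by (simp add: powr_def)
    also have "exp (real_of_int k0 * ln ?q) = ?q powr (real_of_int k0)" using q1 by (simp add: powr_def mult.commute)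
    finally show ?thesis .
  qed
  define a where "a = (\<lambda>k::nat. (real M0 / (\<tau> * ?q powr (real_of_int (k0 + int k + 1) * ?s))) ^ M0)"
  have a_nn: "a k \<ge> 0" for k unfolding a_def using tau by simp
  define h where "h = (\<lambda>\<xi>. indicator (B k0) \<xi> + (\<Sum>k. ennreal (a k) * indicator (B (k0 + int k + 1)) \<xi>) :: ennreal)"
  have pt: "ennreal (\<phi> t \<xi>) \<le> h \<xi>" if xi: "\<xi> \<in> qpn p n" for \<xi>
  proof (cases "\<xi> \<in> B k0")
    case True
    have "\<phi> t \<xi> \<le> 1" unfolding \<phi>_def using t by simp
    hence "ennreal (\<phi> t \<xi>) \<le> indicator (B k0) \<xi>" using True by simp
    thus ?thesis unfolding h_def by (rule order_trans) simp
  next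
    case False
    have x0: "\<xi> \<noteq> padic_vzero" using False vzero_B by auto
    obtain m where m: "padic_norm p n \<xi> = ?q powi m"
      using norm_values[OF xi n p0] norm_zero_iff[OF xi n p0] x0 by auto
    have "\<not> ?q powi m \<le> ?q powi k0" using False B_norm[OF xi] m by simp
    hence mk: "m > k0" using powi_le_iff[OF q1] by simp
    define k where "k = nat (m - k0 - 1)"
    have km: "k0 + int k + 1 = m" unfolding k_def using mk by simp
    have inB: "\<xi> \<in> B (k0 + int k + 1)" unfolding km using B_norm[OF xi] m by simp
    have "padic_norm p n \<xi> powr (real d * \<beta>) = ?q powr (real_of_int m * ?s)"
      unfolding m using p0 by (simp add: powr_real_of_int'[symmetric] powr_powr mult.commute mult.left_commute)
    hence "\<phi> t \<xi> \<le> exp (- (\<tau> * ?q powr (real_of_int m * ?s)))"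
      using phi_le[OF xi t] unfolding \<tau>_def by simp
    also have "\<dots> \<le> a k" unfolding a_def km
      by (rule exp_neg_le_pow) (use tau M0 q1 in \<open>auto intro!: mult_pos_pos\<close>)
    finally have "ennreal (\<phi> t \<xi>) \<le> ennreal (a k) * indicator (B (k0 + int k + 1)) \<xi>"
      using inB by (simp add: ennreal_leI)
    also have "\<dots> \<le> (\<Sum>k. ennreal (a k) * indicator (B (k0 + int k + 1)) \<xi>)"
    proof -
      define F where "F = (\<lambda>j. ennreal (a j) * indicator (B (k0 + int j + 1)) \<xi>)"
      have "sum F {k} \<le> suminf F" by (rule sum_le_suminf[OF summableI]) auto
      moreover have "sum F {k} = F k" by simp
      ultimately show ?thesis unfolding F_def by (simp only:)
    qed
    also have "\<dots> \<le> h \<xi>" unfolding h_def by simp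
    finally show ?thesis .
  qed
  have "(\<integral>\<^sup>+\<xi>. ennreal (\<phi> t \<xi>) \<partial>M) \<le> integral\<^sup>N M h"
    by (rule nn_integral_mono) (use pt space_M in auto)
  also have "integral\<^sup>N M h = emeasure M (B k0) + (\<Sum>k. ennreal (a k) * emeasure M (B (k0 + int k + 1)))"
  proof -
    have "integral\<^sup>N M h = (\<integral>\<^sup>+\<xi>. indicator (B k0) \<xi> \<partial>M) + (\<integral>\<^sup>+\<xi>. (\<Sum>k. ennreal (a k) * indicator (B (k0 + int k + 1)) \<xi>) \<partial>M)"
      unfolding h_def by (rule nn_integral_add) measurable
    also have "(\<integral>\<^sup>+\<xi>. (\<Sum>k. ennreal (a k) * indicator (B (k0 + int k + 1)) \<xi>) \<partial>M)
        = (\<Sum>k. \<integral>\<^sup>+\<xi>. ennreal (a k) * indicator (B (k0 + int k + 1)) \<xi> \<partial>M)"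
      by (rule nn_integral_suminf) measurable
    finally show ?thesis by (simp add: nn_integral_cmult_indicator)
  qed
  also have "\<dots> \<le> ennreal (?q powr (real n * real_of_int k0)) + (\<Sum>k. ennreal (real M0 ^ M0 * ?q powr (real n * real_of_int k0) * \<rho> ^ (k + 1)))"
  proof (rule add_mono)
    show "emeasure M (B k0) \<le> ennreal (?q powr (real n * real_of_int k0))"
      unfolding B_measure using p0 by (simp add: powr_real_of_int'[symmetric])
  next
    show "(\<Sum>k. ennreal (a k) * emeasure M (B (k0 + int k + 1))) \<le> (\<Sum>k. ennreal (real M0 ^ M0 * ?q powr (real n * real_of_int k0) * \<rho> ^ (k + 1)))"
    proof (rule suminf_le[OF _ summableI summableI])
      fix k
      have "ennreal (a k) * emeasure M (B (k0 + int k + 1)) = ennreal (a k * ?q powr (real n * real_of_int (k0 + int k + 1)))"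
        unfolding B_measure using p0 a_nn[of k] by (simp add: ennreal_mult' powr_real_of_int'[symmetric])
      also have "\<dots> \<le> ennreal (real M0 ^ M0 * ?q powr (real n * real_of_int k0) * \<rho> ^ (k + 1))"
        unfolding a_def \<rho>_def by (intro ennreal_leI term_bound[OF q1 s_pos tau M0(1) k0a])
      finally show "ennreal (a k) * emeasure M (B (k0 + int k + 1)) \<le> ennreal (real M0 ^ M0 * ?q powr (real n * real_of_int k0) * \<rho> ^ (k + 1))" .
    qed
  qed
  also have "(\<Sum>k. ennreal (real M0 ^ M0 * ?q powr (real n * real_of_int k0) * \<rho> ^ (k + 1)))
      = ennreal (real M0 ^ M0 * ?q powr (real n * real_of_int k0) * (\<rho> / (1 - \<rho>)))"
  proof -
    have sg: "(\<lambda>k. \<rho> ^ (k + 1)) sums (\<rho> * (1 / (1 - \<rho>)))"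
      using sums_mult[OF geometric_sums[of \<rho>], of \<rho>] rho by (simp add: power_Suc)
    hence "(\<lambda>k. real M0 ^ M0 * ?q powr (real n * real_of_int k0) * \<rho> ^ (k + 1)) sums
        (real M0 ^ M0 * ?q powr (real n * real_of_int k0) * (\<rho> * (1 / (1 - \<rho>))))"
      by (rule sums_mult)
    thus ?thesis using rho by (subst suminf_ennreal2) (auto simp: sums_iff)
  qed
  also have "ennreal (?q powr (real n * real_of_int k0)) + \<dots> = ennreal (?q powr (real n * real_of_int k0) * K1)"
    unfolding K1_def using rho by (simp add: ennreal_plus[symmetric] algebra_simps del: ennreal_plus)
  also have "\<dots> \<le> ennreal (K1 * real p ^ n * c0 powr (- (real n / (\<beta> * real d))) * t powr (- (real n / (\<beta> * real d))))"
  proof (rule ennreal_leI)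
    have "?q powr (real n * real_of_int k0) = (?q powr real_of_int k0) ^ n"
      using p0 by (simp add: powr_realpow[symmetric] powr_powr mult.commute)
    also have "\<dots> \<le> (?q * \<tau> powr (- 1 / ?s)) ^ n" using k0b by (intro power_mono) auto
    also have "\<dots> = ?q ^ n * \<tau> powr (- (real n / ?s))"
      using tau by (simp add: power_mult_distrib powr_realpow[symmetric] powr_powr)
    also have "\<tau> powr (- (real n / ?s)) = c0 powr (- (real n / ?s)) * t powr (- (real n / ?s))"
      unfolding \<tau>_def using t c0_pos by (simp add: powr_mult mult.commute)
    finally have "?q powr (real n * real_of_int k0) \<le> ?q ^ n * (c0 powr (- (real n / ?s)) * t powr (- (real n / ?s)))" .
    thus "?q powr (real n * real_of_int k0) * K1 \<le> K1 * real p ^ n * c0 powr (- (real n / (\<beta> * real d))) * t powr (- (real n / (\<beta> * real d)))"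
      using K1_pos by (simp add: mult_right_mono mult_ac)
  qed
  finally show ?thesis .
qed

lemma bound1:
  assumes x: "x \<in> qpn p n" and t: "t > 0"
  shows "cmod (heat_kernel p n f \<beta> M x t) \<le> K1 * real p ^ n * c0 powr (- (real n / (\<beta> * real d))) * t powr (- (real n / (\<beta> * real d)))"
proof (cases "integrable M (g x t)")
  case False
  hence "heat_kernel p n f \<beta> M x t = 0" unfolding hk by (rule not_integrable_integral_eq)
  thus ?thesis using K1_pos c0_pos by simp
next
  case True
  have "ennreal (cmod (heat_kernel p n f \<beta> M x t)) \<le> (\<integral>\<^sup>+\<xi>. ennreal (cmod (g x t \<xi>)) \<partial>M)"
    unfolding hk by (rule integral_norm_bound_ennreal[OF True])
  also have "\<dots> = (\<integral>\<^sup>+\<xi>. ennreal (\<phi> t \<xi>) \<partial>M)" by (simp add: norm_g)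
  also have "\<dots> \<le> ennreal (K1 * real p ^ n * c0 powr (- (real n / (\<beta> * real d))) * t powr (- (real n / (\<beta> * real d))))"
    by (rule nn_phi_bound[OF t])
  finally show ?thesis using K1_pos c0_pos by (subst (asm) ennreal_le_iff) auto
qed

end

context main
begin

lemma final:
  "\<exists>A>0. \<forall>x\<in>qpn p n. \<forall>t>0.
     cmod (heat_kernel p n f \<beta> M x t)
       \<le> A * t * (padic_norm p n x + t powr (1 / (\<beta> * real d))) powr (- (real d * \<beta>) - real n)"
proof -
  define s where "s = \<beta> * real d"
  define E where "E = s + real n"
  have s: "s > 0" unfolding s_def using s_pos .
  have E: "E > 0" unfolding E_def using s by simp
  have Eeq: "- (real d * \<beta>) - real n = - E" unfolding E_def s_def by simp
  define C1 where "C1 = K1 * real p ^ n * c0 powr (- (real n / (\<beta> * real d)))"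
  define C2 where "C2 = (real p powi (int Lf + 1)) powr (\<beta> * real d + real n) / \<delta>"
  have C1: "C1 > 0" unfolding C1_def using K1_pos c0_pos p0 by simp
  have C2: "C2 > 0" unfolding C2_def using delta_pos p0 by simp
  define A where "A = (C1 + C2) * 2 powr E"
  have A: "A > 0" unfolding A_def using C1 C2 by simp
  show ?thesis
  proof (intro exI[of _ A] conjI A ballI allI impI)
    fix x t assume x: "x \<in> qpn p n" and t: "(t::real) > 0"
    let ?X = "padic_norm p n x" and ?T = "t powr (1 / (\<beta> * real d))"
    have X0: "?X \<ge> 0" by (rule norm_nonneg[OF n])
    have T0: "?T > 0" using t by simp
    have XT: "?X + ?T > 0" using X0 T0 by linarith
    show "cmod (heat_kernel p n f \<beta> M x t) \<le> A * t * (?X + ?T) powr (- (real d * \<beta>) - real n)"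
    proof (cases "?X \<le> ?T")
      case True
      have "(2 * ?T) powr (- E) \<le> (?X + ?T) powr (- E)"
        using True XT E by (intro powr_mono2') auto
      moreover have "(2 * ?T) powr (- E) = 2 powr (- E) * (t powr (- real n / s) / t)"
      proof -
        have "(2 * ?T) powr (- E) = 2 powr (- E) * ?T powr (- E)" by (rule powr_mult)
        also have "?T powr (- E) = t powr (1 / s * - E)" unfolding s_def by (rule powr_powr)
        also have "1 / s * - E = - real n / s + (- 1)" unfolding E_def using s by (simp add: field_simps)
        also have "t powr (- real n / s + (- 1)) = t powr (- real n / s) * t powr (- 1)" by (rule powr_add)
        also have "t powr (- 1) = 1 / t" using t by (simp add: powr_minus divide_inverse)
        finally show ?thesis by simp
      qed
      ultimately have le: "2 powr (- E) * (t powr (- real n / s) / t) \<le> (?X + ?T) powr (- E)" by simp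
      have "cmod (heat_kernel p n f \<beta> M x t) \<le> C1 * t powr (- (real n / (\<beta> * real d)))"
        using bound1[OF x t] unfolding C1_def by simp
      also have "\<dots> \<le> (C1 + C2) * t powr (- real n / s)" using C2 unfolding s_def by (simp add: mult_right_mono)
      also have "\<dots> = A * t * (2 powr (- E) * (t powr (- real n / s) / t))"
        unfolding A_def using t by (simp add: powr_minus field_simps)
      also have "\<dots> \<le> A * t * (?X + ?T) powr (- E)" using le A t by (intro mult_left_mono) auto
      finally show ?thesis by (simp only: Eeq)
    next
      case False
      hence XT': "?X > ?T" by simp
      have xnz: "x \<noteq> padic_vzero"
      proof
        assume "x = padic_vzero"
        hence "?X = 0" using norm_zero_iff[OF x n p0] by simp
        thus False using XT' T0 by simp
      qed
      have Xp: "?X > 0" using XT' T0 by linarith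
      have "(2 * ?X) powr (- E) \<le> (?X + ?T) powr (- E)"
        using XT' XT E Xp by (intro powr_mono2') auto
      moreover have "(2 * ?X) powr (- E) = 2 powr (- E) * ?X powr (- E)" by (rule powr_mult)
      ultimately have le: "2 powr (- E) * ?X powr (- E) \<le> (?X + ?T) powr (- E)" by simp
      have "cmod (heat_kernel p n f \<beta> M x t) \<le> C2 * t * ?X powr (- E)"
        using bound2[OF x xnz t] unfolding C2_def E_def s_def by (simp add: field_simps)
      also have "\<dots> \<le> (C1 + C2) * t * ?X powr (- E)" using C1 t by (simp add: mult_right_mono)
      also have "\<dots> = A * t * (2 powr (- E) * ?X powr (- E))"
      proof -
        have h2: "2 powr E * 2 powr (- E) = (1::real)" by (simp add: powr_minus)
        have "A * t * (2 powr (- E) * ?X powr (- E)) = (C1 + C2) * t * ?X powr (- E) * (2 powr E * 2 powr (- E))"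
          unfolding A_def by (simp only: mult_ac)
        thus ?thesis unfolding h2 by (simp only: mult_1_right)
      qed
      also have "\<dots> \<le> A * t * (?X + ?T) powr (- E)" using le A t by (intro mult_left_mono) auto
      finally show ?thesis by (simp only: Eeq)
    qed
  qed
qed

end

theorem theorem1:
  fixes p n d :: nat and \<beta> :: real and f :: padic_poly and M :: "padicvec measure"
  assumes "prime p" and "n \<ge> 1" and "\<beta> > 0"
    and "padic_int_coeffs f" and "padic_elliptic p n d f"
    and "padic_haar p n M"
  shows "\<exists>A>0. \<forall>x\<in>qpn p n. \<forall>t>0.
           cmod (heat_kernel p n f \<beta> M x t)
             \<le> A * t * (padic_norm p n x + t powr (1 / (\<beta> * real d))) powr (- (real d * \<beta>) - real n)"
proof -
  have p: "p > 1" using assms(1) by (rule prime_gt_1_nat)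
  interpret main p n d f M \<beta>
  proof -
    show "main p n d f M \<beta>"
      by unfold_locales (use p assms in auto)
  qed
  show ?thesis by (rule final)
qed

end
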